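(* Let $\alpha>1$ and let $X,X_1,X_2,\dots$ be independent, identically distributed random variables in a sub-linear expectation space $(\Omega,\mathcal H,\mathbb E)$, with partial sums $S_n=\sum_{k=1}^nX_k$. Suppose that $$\mathbb E\Big\{\exp\big\{(\log^+|X|)^\alpha\big\}\Big\}\le C_{\mathbb V}\Big\{\exp\big\{(\log^+|X|)^\alpha\big\}\Big\}<\infty\quad\text{and}\quad \mathbb E(X)=\mathbb E(-X)=0.$$ Then $$\sum_{n=1}^\infty \exp\{(\log n)^\alpha\}\frac{(\log n)^{\alpha-1}}{n^2}\,\mathbb V\{|S_n|>n\varepsilon\}<\infty\quad\text{for all }\varepsilon>1.$$
   Context: $(\Omega,\mathcal H,\mathbb E)$ is a sub-linear expectation space: $\mathcal H$ is a set of random variables on a measurable space $(\Omega,\mathcal F)$ closed under composition with locally Lipschitz functions $\varphi$ (i.e. $|\varphi(x)-\varphi(y)|\le C(1+|x|^m+|y|^m)|x-y|$), and $\mathbb E:\mathcal H\to[-\infty,\infty]$ is monotone, constant-preserving, positively homogeneous and sub-additive. $\mathbb E$ is assumed regular ($X_n\downarrow0$ pointwise implies $\mathbb E(X_n)\to0$) and countably sub-additive ($0\le X\le\sum_n X_n$, $X_n\ge0$ implies $\mathbb E(X)\le\sum_n\mathbb E(X_n)$). By regularity there is a family $\mathcal P$ of probability measures with $\mathbb E(X)=\sup_{P\in\mathcal P}E_P(X)$; set $\bar{\mathbb E}(X)=\sup_{P\in\mathcal P}E_P(X)$ for Borel $X$ and the capacity $\mathbb V(A)=\bar{\mathbb E}(I_A)$.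 The Choquet integral is $C_{\mathbb V}(X)=\int_0^\infty\mathbb V(X>x)\,dx+\int_{-\infty}^0(\mathbb V(X>x)-1)\,dx$. Independence: $Y$ is independent of $X=(X_1,\dots,X_m)$ if $\mathbb E[\psi(X,Y)]=\mathbb E[\mathbb E[\psi(x,Y)]|_{x=X}]$ for all locally Lipschitz $\psi$; a sequence is independent if $X_{n+1}$ is independent of $(X_1,\dots,X_n)$ for each $n$. Identically distributed: $\mathbb E[\psi(X_i)]=\mathbb E[\psi(X_1)]$ for all locally Lipschitz $\psi$ (whenever finite). Throughout, $\log n$ means $\log^+ n=\max(\log n,0)$. *)

theory Defs
  imports "HOL-Probability.Probability"
begin

definition lnorm :: "real list \<Rightarrow> real" where
  "lnorm xs = sqrt (\<Sum>x\<leftarrow>xs. x ^ 2)"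

definition loc_lip :: "nat \<Rightarrow> (real list \<Rightarrow> real) \<Rightarrow> bool" where
  "loc_lip k \<phi> \<longleftrightarrow> (\<exists>C (m::nat). \<forall>x y. length x = k \<longrightarrow> length y = k \<longrightarrow>
      \<bar>\<phi> x - \<phi> y\<bar> \<le> C * (1 + lnorm x ^ m + lnorm y ^ m) * lnorm (map2 (-) x y))"

definition sublinear_expectation_space ::
  "'a measure \<Rightarrow> ('a \<Rightarrow> real) set \<Rightarrow> (('a \<Rightarrow> real) \<Rightarrow> ereal) \<Rightarrow> bool" where
  "sublinear_expectation_space M H E \<longleftrightarrow>
     H \<subseteq> borel_measurable M \<and>
     (\<forall>Xs \<phi>. set Xs \<subseteq> H \<longrightarrow> loc_lip (length Xs) \<phi> \<longrightarrow> (\<lambda>\<omega>. \<phi> (map (\<lambda>X. X \<omega>) Xs)) \<in> H) \<and>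
     (\<forall>X\<in>H. \<forall>Y\<in>H. (\<forall>\<omega>\<in>space M. X \<omega> \<le> Y \<omega>) \<longrightarrow> E X \<le> E Y) \<and>
     (\<forall>c. E (\<lambda>_. c) = ereal c) \<and>
     (\<forall>X\<in>H. \<forall>c>0. E (\<lambda>\<omega>. c * X \<omega>) = ereal c * E X) \<and>
     (\<forall>X\<in>H. \<forall>Y\<in>H. \<not> (E X = \<infinity> \<and> E Y = -\<infinity>) \<and> \<not> (E X = -\<infinity> \<and> E Y = \<infinity>) \<longrightarrow>
        E (\<lambda>\<omega>. X \<omega> + Y \<omega>) \<le> E X + E Y)"

definition regular_sle ::
  "'a measure \<Rightarrow> ('a \<Rightarrow> real) set \<Rightarrow> (('a \<Rightarrow> real) \<Rightarrow> ereal) \<Rightarrow> bool" where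
  "regular_sle M H E \<longleftrightarrow>
     (\<forall>Xn. (\<forall>n. Xn n \<in> H) \<longrightarrow>
        (\<forall>\<omega>\<in>space M. decseq (\<lambda>n. Xn n \<omega>) \<and> (\<lambda>n. Xn n \<omega>) \<longlonglongrightarrow> 0) \<longrightarrow>
        (\<lambda>n. E (Xn n)) \<longlonglongrightarrow> 0)"

definition countably_subadditive ::
  "'a measure \<Rightarrow> ('a \<Rightarrow> real) set \<Rightarrow> (('a \<Rightarrow> real) \<Rightarrow> ereal) \<Rightarrow> bool" where
  "countably_subadditive M H E \<longleftrightarrow>
     (\<forall>X Xn. X \<in> H \<longrightarrow> (\<forall>n. Xn n \<in> H) \<longrightarrow> (\<forall>n. \<forall>\<omega>\<in>space M. 0 \<le> Xn n \<omega>) \<longrightarrow>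
        (\<forall>\<omega>\<in>space M. 0 \<le> X \<omega> \<and> ennreal (X \<omega>) \<le> (\<Sum>n. ennreal (Xn n \<omega>))) \<longrightarrow>
        E X \<le> (\<Sum>n. E (Xn n)))"

definition ext_expect :: "'a measure \<Rightarrow> ('a \<Rightarrow> real) \<Rightarrow> ereal" where
  "ext_expect P X = enn2ereal (\<integral>\<^sup>+ \<omega>. ennreal (X \<omega>) \<partial>P) - enn2ereal (\<integral>\<^sup>+ \<omega>. ennreal (- X \<omega>) \<partial>P)"

definition represents ::
  "'a measure \<Rightarrow> ('a \<Rightarrow> real) set \<Rightarrow> (('a \<Rightarrow> real) \<Rightarrow> ereal) \<Rightarrow> 'a measure set \<Rightarrow> bool" where
  "represents M H E \<P> \<longleftrightarrow> \<P> \<noteq> {} \<and> (\<forall>P\<in>\<P>. prob_space P \<and> sets P = sets M) \<and>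
     (\<forall>X\<in>H. E X = (SUP P\<in>\<P>. ext_expect P X))"

definition capacity :: "'a measure set \<Rightarrow> 'a set \<Rightarrow> ennreal" where
  "capacity \<P> A = (SUP P\<in>\<P>. emeasure P A)"

definition choquet :: "'a measure \<Rightarrow> 'a measure set \<Rightarrow> ('a \<Rightarrow> real) \<Rightarrow> ereal" where
  "choquet M \<P> X =
     enn2ereal (\<integral>\<^sup>+ x\<in>{0..}. capacity \<P> {\<omega>\<in>space M. X \<omega> > x} \<partial>lborel)
   - enn2ereal (\<integral>\<^sup>+ x\<in>{..<0}. (1 - capacity \<P> {\<omega>\<in>space M. X \<omega> > x}) \<partial>lborel)"

text \<open>Extension of E to non-negative random variables outside H by truncation:
  E[Y] = lim_{c->oo} E[min(Y,c)].\<close>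
definition ext_E :: "(('a \<Rightarrow> real) \<Rightarrow> ereal) \<Rightarrow> ('a \<Rightarrow> real) \<Rightarrow> ereal" where
  "ext_E E Y = (SUP c::real. E (\<lambda>\<omega>. min (Y \<omega>) c))"

definition indep_of ::
  "(('a \<Rightarrow> real) \<Rightarrow> ereal) \<Rightarrow> ('a \<Rightarrow> real) list \<Rightarrow> ('a \<Rightarrow> real) \<Rightarrow> bool" where
  "indep_of E Xs Y \<longleftrightarrow>
     (\<forall>\<psi>. loc_lip (Suc (length Xs)) \<psi> \<longrightarrow>
        (\<forall>x. length x = length Xs \<longrightarrow> \<bar>E (\<lambda>\<omega>. \<psi> (x @ [Y \<omega>]))\<bar> \<noteq> \<infinity>) \<longrightarrow>
        E (\<lambda>\<omega>. \<psi> (map (\<lambda>X. X \<omega>) Xs @ [Y \<omega>])) =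
        E (\<lambda>\<omega>. real_of_ereal (E (\<lambda>\<omega>'. \<psi> (map (\<lambda>X. X \<omega>) Xs @ [Y \<omega>'])))))"

definition ident_distr ::
  "(('a \<Rightarrow> real) \<Rightarrow> ereal) \<Rightarrow> ('a \<Rightarrow> real) \<Rightarrow> ('a \<Rightarrow> real) \<Rightarrow> bool" where
  "ident_distr E X Y \<longleftrightarrow>
     (\<forall>\<psi>. loc_lip 1 \<psi> \<longrightarrow>
        (\<bar>E (\<lambda>\<omega>. \<psi> [X \<omega>])\<bar> \<noteq> \<infinity> \<or> \<bar>E (\<lambda>\<omega>. \<psi> [Y \<omega>])\<bar> \<noteq> \<infinity>) \<longrightarrow>
        E (\<lambda>\<omega>. \<psi> [X \<omega>]) = E (\<lambda>\<omega>. \<psi> [Y \<omega>]))"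

definition lnp :: "real \<Rightarrow> real" where
  "lnp t = max (ln t) 0"

end

theory Submission
  imports Defs "HOL-Real_Asymp.Real_Asymp"
begin

lemma lnorm_single[simp]: "lnorm [a] = \<bar>a\<bar>"
  by (simp add: lnorm_def)

lemma nth_le_lnorm:
  assumes "length x = length y" "i < length x"
  shows "\<bar>x!i - y!i\<bar> \<le> lnorm (map2 (-) x y)"
proof -
  let ?d = "map2 (-) x y"
  have i: "i < length ?d" using assms by simp
  have di: "?d ! i = x!i - y!i" using assms by simp
  have "(?d!i)^2 \<le> (\<Sum>z\<leftarrow>?d. z^2)"
  proof -
    have "(?d!i)^2 \<in> set (map (\<lambda>z. z^2) ?d)" using i by (metis length_map nth_map nth_mem)
    moreover have "\<forall>z\<in>set (map (\<lambda>z. z^2) ?d). 0 \<le> z" by auto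
    ultimately show ?thesis
      by (metis member_le_sum_list)
  qed
  then have "sqrt ((?d!i)^2) \<le> lnorm ?d" unfolding lnorm_def by (rule real_sqrt_le_mono)
  then show ?thesis using di by simp
qed

lemma loc_lip1:
  assumes "\<And>x y. \<bar>h x - h y\<bar> \<le> C * \<bar>x - y\<bar>"
  shows "loc_lip 1 (\<lambda>l. h (hd l))"
  unfolding loc_lip_def
proof (rule exI[of _ "\<bar>C\<bar>"], rule exI[of _ 0], intro allI impI)
  fix x y :: "real list" assume "length x = 1" "length y = 1"
  then obtain a b where xy: "x = [a]" "y = [b]"
    by (metis One_nat_def length_0_conv length_Suc_conv)
  have "\<bar>h a - h b\<bar> \<le> \<bar>C\<bar> * \<bar>a - b\<bar>" using assms[of a b]
    by (smt (verit) abs_ge_self abs_not_less_zero mult_right_mono)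
  also have "\<dots> \<le> \<bar>C\<bar> * 3 * \<bar>a - b\<bar>" by (simp add: mult_right_mono)
  finally show "\<bar>h (hd x) - h (hd y)\<bar> \<le> \<bar>C\<bar> * (1 + lnorm x ^ 0 + lnorm y ^ 0) * lnorm (map2 (-) x y)"
    using xy by simp
qed

locale sle_setting =
  fixes M :: "'a measure" and H :: "('a \<Rightarrow> real) set" and E :: "('a \<Rightarrow> real) \<Rightarrow> ereal"
    and \<P> :: "'a measure set"
  assumes sle: "sublinear_expectation_space M H E" and rep: "represents M H E \<P>"
begin

lemma H_meas: "Z \<in> H \<Longrightarrow> Z \<in> borel_measurable M"
  using sle unfolding sublinear_expectation_space_def by auto

lemma H_comp: "set Zs \<subseteq> H \<Longrightarrow> loc_lip (length Zs) \<phi> \<Longrightarrow> (\<lambda>\<omega>. \<phi> (map (\<lambda>X. X \<omega>) Zs)) \<in> H"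
  using sle unfolding sublinear_expectation_space_def by auto

lemma E_mono: "Z \<in> H \<Longrightarrow> W \<in> H \<Longrightarrow> (\<And>\<omega>. \<omega> \<in> space M \<Longrightarrow> Z \<omega> \<le> W \<omega>) \<Longrightarrow> E Z \<le> E W"
  using sle unfolding sublinear_expectation_space_def by auto

lemma E_const[simp]: "E (\<lambda>_. c) = ereal c"
  using sle unfolding sublinear_expectation_space_def by auto

lemma E_hom: "Z \<in> H \<Longrightarrow> c > 0 \<Longrightarrow> E (\<lambda>\<omega>. c * Z \<omega>) = ereal c * E Z"
  using sle unfolding sublinear_expectation_space_def by auto

lemma E_add: "Z \<in> H \<Longrightarrow> W \<in> H \<Longrightarrow> \<bar>E Z\<bar> \<noteq> \<infinity> \<Longrightarrow> E (\<lambda>\<omega>. Z \<omega> + W \<omega>) \<le> E Z + E W"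
  using sle unfolding sublinear_expectation_space_def by auto

lemma E_rep: "Z \<in> H \<Longrightarrow> E Z = (SUP P\<in>\<P>. ext_expect P Z)"
  using rep unfolding represents_def by auto

lemma P_ne: "\<P> \<noteq> {}" using rep unfolding represents_def by auto

lemma P_prob: "P \<in> \<P> \<Longrightarrow> prob_space P" using rep unfolding represents_def by auto
lemma P_sets: "P \<in> \<P> \<Longrightarrow> sets P = sets M" using rep unfolding represents_def by auto
lemma P_space: "P \<in> \<P> \<Longrightarrow> space P = space M" using P_sets sets_eq_imp_space_eq by blast

lemma H_lip1: "Z \<in> H \<Longrightarrow> (\<And>x y. \<bar>h x - h y\<bar> \<le> C * \<bar>x - y\<bar>) \<Longrightarrow> (\<lambda>\<omega>. h (Z \<omega>)) \<in> H"
  using H_comp[of "[Z]" "\<lambda>l. h (hd l)"] loc_lip1[of h C] by simp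

lemma H_const: "(\<lambda>_. c) \<in> H"
proof -
  have "loc_lip 0 (\<lambda>_. c)" unfolding loc_lip_def by (auto intro!: exI[of _ 0])
  then show ?thesis using H_comp[of "[]" "\<lambda>_. c"] by simp
qed

lemma H_add: assumes "Z \<in> H" "W \<in> H" shows "(\<lambda>\<omega>. Z \<omega> + W \<omega>) \<in> H"
proof -
  have "loc_lip 2 (\<lambda>l. l!0 + l!1)" unfolding loc_lip_def
  proof (rule exI[of _ 2], rule exI[of _ 0], intro allI impI)
    fix x y :: "real list" assume l: "length x = 2" "length y = 2"
    have "\<bar>x!0 - y!0\<bar> \<le> lnorm (map2 (-) x y)" "\<bar>x!1 - y!1\<bar> \<le> lnorm (map2 (-) x y)"
      using nth_le_lnorm[of x y] l by auto
    then show "\<bar>x ! 0 + x ! 1 - (y ! 0 + y ! 1)\<bar> \<le> (2::real) * (1 + lnorm x ^ 0 + lnorm y ^ 0) * lnorm (map2 (-) x y)"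
      by auto
  qed
  then show ?thesis using H_comp[of "[Z, W]" "\<lambda>l. l!0 + l!1"] assms by (simp add: numeral_2_eq_2)
qed

lemma H_cmult: "Z \<in> H \<Longrightarrow> (\<lambda>\<omega>. c * Z \<omega>) \<in> H"
  using H_lip1[of Z "\<lambda>x. c * x" "\<bar>c\<bar>"] by (simp add: abs_mult flip: right_diff_distrib)

lemma H_sq: assumes "Z \<in> H" shows "(\<lambda>\<omega>. (Z \<omega>)^2) \<in> H"
proof -
  have "loc_lip 1 (\<lambda>l. (hd l)^2)" unfolding loc_lip_def
  proof (rule exI[of _ 1], rule exI[of _ 1], intro allI impI)
    fix x y :: "real list" assume "length x = 1" "length y = 1"
    then obtain a b where xy: "x = [a]" "y = [b]"
      by (metis One_nat_def length_0_conv length_Suc_conv)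
    have "\<bar>a^2 - b^2\<bar> = \<bar>a + b\<bar> * \<bar>a - b\<bar>" by (simp add: power2_eq_square abs_mult[symmetric] algebra_simps)
    also have "\<dots> \<le> (1 + \<bar>a\<bar> + \<bar>b\<bar>) * \<bar>a - b\<bar>" by (intro mult_right_mono) auto
    finally show "\<bar>(hd x)^2 - (hd y)^2\<bar> \<le> 1 * (1 + lnorm x ^ 1 + lnorm y ^ 1) * lnorm (map2 (-) x y)"
      using xy by simp
  qed
  then show ?thesis using H_comp[of "[Z]" "\<lambda>l. (hd l)^2"] assms by simp
qed

end

context sle_setting begin

lemma P_sets_in: "P \<in> \<P> \<Longrightarrow> A \<in> sets M \<Longrightarrow> A \<in> sets P" using P_sets by auto

lemma cap_le_1: "capacity \<P> A \<le> 1"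
  unfolding capacity_def by (rule SUP_least) (simp add: P_prob prob_space.emeasure_le_1)

lemma cap_finite: "capacity \<P> A < \<infinity>"
  using cap_le_1[of A] by (simp add: order_le_less_trans)

lemma cap_mono: "A \<subseteq> B \<Longrightarrow> B \<in> sets M \<Longrightarrow> capacity \<P> A \<le> capacity \<P> B"
  unfolding capacity_def by (intro SUP_mono) (auto intro!: emeasure_mono bexI simp: P_sets)

lemma cap_UN:
  assumes "finite I" "\<And>i. i \<in> I \<Longrightarrow> A i \<in> sets M"
  shows "capacity \<P> (\<Union>i\<in>I. A i) \<le> (\<Sum>i\<in>I. capacity \<P> (A i))"
  unfolding capacity_def
proof (rule SUP_least)
  fix P assume P: "P \<in> \<P>"
  have "emeasure P (\<Union>i\<in>I. A i) \<le> (\<Sum>i\<in>I. emeasure P (A i))"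
    using assms P by (intro emeasure_subadditive_finite) (auto simp: P_sets)
  also have "\<dots> \<le> (\<Sum>i\<in>I. SUP P\<in>\<P>. emeasure P (A i))"
    using P by (intro sum_mono SUP_upper)
  finally show "emeasure P (\<Union>i\<in>I. A i) \<le> (\<Sum>i\<in>I. SUP P\<in>\<P>. emeasure P (A i))" .
qed

lemma cap_Un:
  assumes "A \<in> sets M" "B \<in> sets M"
  shows "capacity \<P> (A \<union> B) \<le> capacity \<P> A + capacity \<P> B"
  unfolding capacity_def
proof (rule SUP_least)
  fix P assume P: "P \<in> \<P>"
  have "emeasure P (A \<union> B) \<le> emeasure P A + emeasure P B"
    using assms P by (intro emeasure_subadditive) (auto simp: P_sets)
  also have "\<dots> \<le> (SUP P\<in>\<P>. emeasure P A) + (SUP P\<in>\<P>. emeasure P B)"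
    using P by (intro add_mono SUP_upper)
  finally show "emeasure P (A \<union> B) \<le> (SUP P\<in>\<P>. emeasure P A) + (SUP P\<in>\<P>. emeasure P B)" .
qed

lemma cap_space: "capacity \<P> (space M) = 1"
proof -
  have "\<And>P. P \<in> \<P> \<Longrightarrow> emeasure P (space M) = 1"
    using P_prob P_space prob_space.emeasure_space_1 by metis
  then show ?thesis unfolding capacity_def using P_ne by simp
qed

lemma ext_nonneg:
  assumes "P \<in> \<P>" "\<And>\<omega>. \<omega> \<in> space M \<Longrightarrow> 0 \<le> Z \<omega>"
  shows "ext_expect P Z = enn2ereal (\<integral>\<^sup>+ \<omega>. ennreal (Z \<omega>) \<partial>P)"
proof -
  have "(\<integral>\<^sup>+ \<omega>. ennreal (- Z \<omega>) \<partial>P) = (\<integral>\<^sup>+ \<omega>. 0 \<partial>P)"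
    using assms by (intro nn_integral_cong) (auto simp: P_space ennreal_neg)
  then show ?thesis unfolding ext_expect_def by (simp add: zero_ennreal.rep_eq)
qed

lemma cap_le_E:
  assumes Z: "Z \<in> H" and nn: "\<And>\<omega>. \<omega> \<in> space M \<Longrightarrow> 0 \<le> Z \<omega>"
    and A: "A \<in> sets M" and one: "\<And>\<omega>. \<omega> \<in> A \<Longrightarrow> 1 \<le> Z \<omega>"
    and r: "E Z \<le> ereal r"
  shows "capacity \<P> A \<le> ennreal r"
  unfolding capacity_def
proof (rule SUP_least)
  fix P assume P: "P \<in> \<P>"
  have "emeasure P A = (\<integral>\<^sup>+ \<omega>. indicator A \<omega> \<partial>P)"
    using A P by (simp add: P_sets)
  also have "\<dots> \<le> (\<integral>\<^sup>+ \<omega>. ennreal (Z \<omega>) \<partial>P)"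
    by (intro nn_integral_mono) (auto simp: indicator_def one)
  finally have 1: "emeasure P A \<le> (\<integral>\<^sup>+ \<omega>. ennreal (Z \<omega>) \<partial>P)" .
  have "enn2ereal (\<integral>\<^sup>+ \<omega>. ennreal (Z \<omega>) \<partial>P) = ext_expect P Z"
    using ext_nonneg[OF P nn] by simp
  also have "\<dots> \<le> E Z" using E_rep[OF Z] P by (auto intro: SUP_upper)
  also have "\<dots> \<le> ereal r" by fact
  finally have "e2ennreal (enn2ereal (\<integral>\<^sup>+ \<omega>. ennreal (Z \<omega>) \<partial>P)) \<le> e2ennreal (ereal r)"
    by (rule e2ennreal_mono)
  then show "emeasure P A \<le> ennreal r" using 1 by simp
qed

lemma E_le_cap:
  assumes Z: "Z \<in> H" and b: "\<And>\<omega>. \<omega> \<in> space M \<Longrightarrow> 0 \<le> Z \<omega> \<and> Z \<omega> \<le> 1 \<and> (Z \<omega> > 0 \<longrightarrow> \<omega> \<in> A)"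
    and A: "A \<in> sets M"
  shows "E Z \<le> enn2ereal (capacity \<P> A)"
proof -
  have "E Z = (SUP P\<in>\<P>. ext_expect P Z)" using E_rep[OF Z] .
  also have "\<dots> \<le> enn2ereal (capacity \<P> A)"
  proof (rule SUP_least)
    fix P assume P: "P \<in> \<P>"
    have "(\<integral>\<^sup>+ \<omega>. ennreal (Z \<omega>) \<partial>P) \<le> (\<integral>\<^sup>+ \<omega>. indicator A \<omega> \<partial>P)"
      using b by (intro nn_integral_mono) (force simp: P_space[OF P] indicator_def)
    also have "\<dots> = emeasure P A" using A P by (simp add: P_sets)
    also have "\<dots> \<le> capacity \<P> A" unfolding capacity_def using P by (rule SUP_upper)
    finally show "ext_expect P Z \<le> enn2ereal (capacity \<P> A)"
      using ext_nonneg[OF P] b by (simp add: less_eq_ennreal.rep_eq)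
  qed
  finally show ?thesis .
qed

lemma E_bounds:
  assumes "Z \<in> H" "\<And>\<omega>. \<omega> \<in> space M \<Longrightarrow> a \<le> Z \<omega> \<and> Z \<omega> \<le> b"
  shows "ereal a \<le> E Z" "E Z \<le> ereal b"
  using E_mono[OF H_const[of a] assms(1)] E_mono[OF assms(1) H_const[of b]] assms(2) by auto

lemma E_hom0: "Z \<in> H \<Longrightarrow> c \<ge> 0 \<Longrightarrow> E (\<lambda>\<omega>. c * Z \<omega>) = ereal c * E Z"
  by (cases "c = 0") (auto simp: E_hom zero_ereal_def[symmetric])

end

lemma prod_diff_bound:
  fixes a b :: "nat \<Rightarrow> real"
  assumes B: "B \<ge> 1" and ab: "\<And>i. i < N \<Longrightarrow> 0 \<le> a i \<and> a i \<le> B \<and> 0 \<le> b i \<and> b i \<le> B"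
  shows "\<bar>(\<Prod>i<N. a i) - (\<Prod>i<N. b i)\<bar> \<le> B^N * (\<Sum>i<N. \<bar>a i - b i\<bar>)"
proof -
  have "norm ((\<Prod>i\<in>{..<N}. a i / B) - (\<Prod>i\<in>{..<N}. b i / B)) \<le> (\<Sum>i\<in>{..<N}. norm (a i / B - b i / B))"
    using ab B by (intro norm_prod_diff) auto
  also have "\<dots> \<le> (\<Sum>i<N. \<bar>a i - b i\<bar>)"
  proof (intro sum_mono)
    fix i assume "i \<in> {..<N}"
    have "norm (a i / B - b i / B) = \<bar>a i - b i\<bar> / B" using B by (simp add: diff_divide_distrib[symmetric])
    also have "\<dots> \<le> \<bar>a i - b i\<bar>" using B by (simp add: divide_le_eq mult_le_cancel_left1)
    finally show "norm (a i / B - b i / B) \<le> \<bar>a i - b i\<bar>" .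
  qed
  finally have *: "\<bar>(\<Prod>i<N. a i) / B^N - (\<Prod>i<N. b i) / B^N\<bar> \<le> (\<Sum>i<N. \<bar>a i - b i\<bar>)"
    by (simp add: prod_dividef)
  have "\<bar>(\<Prod>i<N. a i) - (\<Prod>i<N. b i)\<bar> = B^N * \<bar>(\<Prod>i<N. a i) / B^N - (\<Prod>i<N. b i) / B^N\<bar>"
    using B by (simp add: diff_divide_distrib[symmetric] abs_div)
  also have "\<dots> \<le> B^N * (\<Sum>i<N. \<bar>a i - b i\<bar>)" using * B by (intro mult_left_mono) auto
  finally show ?thesis .
qed

lemma loc_lip_prod:
  fixes h :: "nat \<Rightarrow> real \<Rightarrow> real"
  assumes hb: "\<And>k x. 0 \<le> h k x \<and> h k x \<le> B" and hl: "\<And>k x y. \<bar>h k x - h k y\<bar> \<le> Lc * \<bar>x - y\<bar>"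
  shows "loc_lip N (\<lambda>l. \<Prod>i<length l. h (Suc i) (l!i))"
  unfolding loc_lip_def
proof (rule exI[of _ "(max B 1)^N * \<bar>Lc\<bar> * N"], rule exI[of _ 0], intro allI impI)
  fix x y :: "real list" assume l: "length x = N" "length y = N"
  let ?B = "max B 1"
  have "\<bar>(\<Prod>i<N. h (Suc i) (x!i)) - (\<Prod>i<N. h (Suc i) (y!i))\<bar> \<le> ?B^N * (\<Sum>i<N. \<bar>h (Suc i) (x!i) - h (Suc i) (y!i)\<bar>)"
    using hb by (intro prod_diff_bound) (auto simp: le_max_iff_disj)
  also have "\<dots> \<le> ?B^N * (\<Sum>i<N. \<bar>Lc\<bar> * lnorm (map2 (-) x y))"
  proof (intro mult_left_mono sum_mono)
    fix i assume i: "i \<in> {..<N}"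
    have "\<bar>h (Suc i) (x!i) - h (Suc i) (y!i)\<bar> \<le> Lc * \<bar>x!i - y!i\<bar>" by (rule hl)
    also have "\<dots> \<le> \<bar>Lc\<bar> * \<bar>x!i - y!i\<bar>" by (simp add: mult_right_mono)
    also have "\<dots> \<le> \<bar>Lc\<bar> * lnorm (map2 (-) x y)" using nth_le_lnorm[of x y i] l i by (intro mult_left_mono) auto
    finally show "\<bar>h (Suc i) (x!i) - h (Suc i) (y!i)\<bar> \<le> \<bar>Lc\<bar> * lnorm (map2 (-) x y)" .
  qed simp
  also have "\<dots> = (max B 1)^N * \<bar>Lc\<bar> * N * lnorm (map2 (-) x y)" by simp
  also have "\<dots> \<le> (max B 1)^N * \<bar>Lc\<bar> * N * (1 + lnorm x ^ 0 + lnorm y ^ 0) * lnorm (map2 (-) x y)"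
  proof -
    have "0 \<le> lnorm (map2 (-) x y)" unfolding lnorm_def by (intro real_sqrt_ge_zero sum_list_nonneg) auto
    then have "0 \<le> (max B 1)^N * \<bar>Lc\<bar> * N * lnorm (map2 (-) x y)" by simp
    then show ?thesis by (simp add: mult.commute mult.left_commute)
  qed
  finally show "\<bar>(\<Prod>i<length x. h (Suc i) (x!i)) - (\<Prod>i<length y. h (Suc i) (y!i))\<bar>
      \<le> (max B 1)^N * \<bar>Lc\<bar> * real N * (1 + lnorm x ^ 0 + lnorm y ^ 0) * lnorm (map2 (-) x y)"
    using l by simp
qed

locale sle_seq = sle_setting +
  fixes X :: "'a \<Rightarrow> real" and Xs :: "nat \<Rightarrow> 'a \<Rightarrow> real"
  assumes XH: "X \<in> H" and XsH: "\<And>n. n \<ge> 1 \<Longrightarrow> Xs n \<in> H"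
    and ident: "\<And>n. n \<ge> 1 \<Longrightarrow> ident_distr E (Xs n) X"
    and indep: "\<And>n. n \<ge> 1 \<Longrightarrow> indep_of E (map Xs [1..<Suc n]) (Xs (Suc n))"
begin

lemma ident_E:
  assumes k: "k \<ge> 1" and fin: "\<bar>E (\<lambda>\<omega>. g (X \<omega>))\<bar> \<noteq> \<infinity>" and gl: "\<And>x y. \<bar>g x - g y\<bar> \<le> C * \<bar>x - y\<bar>"
  shows "E (\<lambda>\<omega>. g (Xs k \<omega>)) = E (\<lambda>\<omega>. g (X \<omega>))"
  using ident[OF k] loc_lip1[of g C, OF gl] fin unfolding ident_distr_def by auto

lemma prod_E:
  fixes h :: "nat \<Rightarrow> real \<Rightarrow> real"
  assumes hb: "\<And>k x. 0 \<le> h k x \<and> h k x \<le> B" and hl: "\<And>k x y. \<bar>h k x - h k y\<bar> \<le> Lc * \<bar>x - y\<bar>"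
  shows "(\<lambda>\<omega>. \<Prod>i<n. h (Suc i) (Xs (Suc i) \<omega>)) \<in> H \<and>
         E (\<lambda>\<omega>. \<Prod>i<n. h (Suc i) (Xs (Suc i) \<omega>)) = ereal (\<Prod>i<n. real_of_ereal (E (\<lambda>\<omega>. h (Suc i) (X \<omega>))))"
proof (induction n)
  case 0
  then show ?case using H_const[of 1] by simp
next
  case (Suc n)
  define ee where "ee k = real_of_ereal (E (\<lambda>\<omega>. h k (X \<omega>)))" for k
  have hH: "(\<lambda>\<omega>. h k (Z \<omega>)) \<in> H" if "Z \<in> H" for k Z using H_lip1[OF that hl] .
  have hX: "(\<lambda>\<omega>. h k (X \<omega>)) \<in> H" for k using hH XH by blast
  have eeE: "E (\<lambda>\<omega>. h k (X \<omega>)) = ereal (ee k)" and ee0: "0 \<le> ee k" for k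
  proof -
    have "ereal 0 \<le> E (\<lambda>\<omega>. h k (X \<omega>))" "E (\<lambda>\<omega>. h k (X \<omega>)) \<le> ereal B"
      using E_bounds[OF hX[of k], of 0 B] hb by auto
    then show "E (\<lambda>\<omega>. h k (X \<omega>)) = ereal (ee k)" "0 \<le> ee k" unfolding ee_def
      by (cases "E (\<lambda>\<omega>. h k (X \<omega>))"; auto)+
  qed
  have eeXs: "E (\<lambda>\<omega>. h k (Xs k \<omega>)) = ereal (ee k)" if "k \<ge> 1" for k
    using ident_E[OF that, of "h k" Lc] eeE hl by simp
  define Pr where "Pr m \<omega> = (\<Prod>i<m. h (Suc i) (Xs (Suc i) \<omega>))" for m \<omega>
  have IH: "Pr n \<in> H" "E (Pr n) = ereal (\<Prod>i<n. ee (Suc i))"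
    using Suc.IH unfolding Pr_def ee_def by (auto simp: fun_eq_iff)
  have step: "Pr (Suc n) \<omega> = Pr n \<omega> * h (Suc n) (Xs (Suc n) \<omega>)" for \<omega>
    unfolding Pr_def by simp
  have goal: "Pr (Suc n) \<in> H \<and> E (Pr (Suc n)) = ereal (\<Prod>i<Suc n. ee (Suc i))"
  proof (cases "n = 0")
    case True
    then have "Pr (Suc n) = (\<lambda>\<omega>. h 1 (Xs 1 \<omega>))" unfolding Pr_def by (auto simp: fun_eq_iff)
    then show ?thesis using hH[OF XsH[of 1]] eeXs[of 1] True by simp
  next
    case False
    then have n1: "n \<ge> 1" by simp
    define Ls where "Ls = map Xs [1..<Suc n]"
    have lenLs: "length Ls = n" unfolding Ls_def by simp
    have LsH: "set (Ls @ [Xs (Suc n)]) \<subseteq> H" unfolding Ls_def using XsH by auto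
    define \<psi> where "\<psi> l = (\<Prod>i<length l. h (Suc i) (l!i))" for l
    have lip: "loc_lip N \<psi>" for N unfolding \<psi>_def by (rule loc_lip_prod[OF hb hl])
    have \<psi>app: "\<psi> (x @ [y]) = \<psi> x * h (Suc (length x)) y" for x y
    proof -
      have "\<psi> (x @ [y]) = (\<Prod>i<Suc (length x). h (Suc i) ((x @ [y])!i))" unfolding \<psi>_def by simp
      also have "\<dots> = (\<Prod>i<length x. h (Suc i) ((x @ [y])!i)) * h (Suc (length x)) y"
        by (simp add: nth_append)
      also have "(\<Prod>i<length x. h (Suc i) ((x @ [y])!i)) = \<psi> x" unfolding \<psi>_def
        by (intro prod.cong) (auto simp: nth_append)
      finally show ?thesis .
    qed
    have \<psi>0: "0 \<le> \<psi> x" for x unfolding \<psi>_def using hb by (simp add: prod_nonneg)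
    have inner: "E (\<lambda>\<omega>. \<psi> (x @ [Xs (Suc n) \<omega>])) = ereal (\<psi> x * ee (Suc n))" if "length x = n" for x
    proof -
      have "E (\<lambda>\<omega>. \<psi> (x @ [Xs (Suc n) \<omega>])) = E (\<lambda>\<omega>. \<psi> x * h (Suc n) (Xs (Suc n) \<omega>))"
        using that by (simp add: \<psi>app)
      also have "\<dots> = ereal (\<psi> x) * E (\<lambda>\<omega>. h (Suc n) (Xs (Suc n) \<omega>))"
        by (rule E_hom0[OF hH[OF XsH] \<psi>0]) simp
      also have "\<dots> = ereal (\<psi> x * ee (Suc n))" using eeXs[of "Suc n"] by simp
      finally show ?thesis .
    qed
    have mapLs: "\<psi> (map (\<lambda>X. X \<omega>) Ls) = Pr n \<omega>" for \<omega>
      unfolding \<psi>_def Pr_def Ls_def by (intro prod.cong) (auto simp: nth_map simp del: upt_Suc)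
    have eq1: "Pr (Suc n) = (\<lambda>\<omega>. \<psi> (map (\<lambda>X. X \<omega>) Ls @ [Xs (Suc n) \<omega>]))"
      by (auto simp: fun_eq_iff \<psi>app mapLs step lenLs)
    have memb: "Pr (Suc n) \<in> H"
    proof -
      have "(\<lambda>\<omega>. \<psi> (map (\<lambda>X. X \<omega>) (Ls @ [Xs (Suc n)]))) \<in> H" by (rule H_comp[OF LsH lip])
      then show ?thesis using eq1 by simp
    qed
    have ind: "indep_of E Ls (Xs (Suc n))" unfolding Ls_def by (rule indep[OF n1])
    have "E (Pr (Suc n)) = E (\<lambda>\<omega>. real_of_ereal (E (\<lambda>\<omega>'. \<psi> (map (\<lambda>X. X \<omega>) Ls @ [Xs (Suc n) \<omega>']))))"
      using ind lip[of "Suc (length Ls)"] inner lenLs unfolding indep_of_def eq1 by auto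
    also have "\<dots> = E (\<lambda>\<omega>. ee (Suc n) * Pr n \<omega>)"
      using inner[of "map (\<lambda>X. X \<omega>) Ls" for \<omega>] lenLs by (simp add: mapLs mult.commute)
    also have "\<dots> = ereal (ee (Suc n)) * E (Pr n)" by (rule E_hom0[OF IH(1) ee0])
    also have "\<dots> = ereal (\<Prod>i<Suc n. ee (Suc i))" using IH(2) by (simp add: mult.commute)
    finally show ?thesis using memb by simp
  qed
  then show ?case unfolding Pr_def ee_def by simp
qed

end

lemma asy_ii: assumes "a > 1" "d > 0"
  shows "eventually (\<lambda>L::real. L powr a + (a - 1) * ln L + 2 * L \<le> (7/4) * (L - d) powr a) at_top"
  using assms by real_asymp

lemma asy_iii: assumes "a > 1" "c > 0" "e > 0"
  shows "eventually (\<lambda>L::real. L powr a + (a - 1) * ln L + C \<le> e * exp (c * L)) at_top"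
  using assms by real_asymp

lemma asy_i: assumes "a > 1"
  shows "eventually (\<lambda>x::real. exp (ln x powr a) * ln x powr (a - 1) / x \<le> (2 / a) * (exp (ln x powr a) - exp (ln (x - 1) powr a))) at_top"
  using assms by real_asymp

definition fa :: "real \<Rightarrow> real \<Rightarrow> real" where "fa a x = exp (lnp x powr a)"

lemma lnp_nonneg: "0 \<le> lnp x" by (simp add: lnp_def)
lemma lnp_ge1: "x \<ge> 1 \<Longrightarrow> lnp x = ln x" by (simp add: lnp_def)
lemma lnp_mono: "0 \<le> x \<Longrightarrow> x \<le> y \<Longrightarrow> lnp x \<le> lnp y"
  by (cases "x = 0") (auto simp: lnp_def max_def)
lemma fa_ge1: "1 \<le> fa a x" by (simp add: fa_def lnp_nonneg)
lemma fa_pos: "0 < fa a x" by (simp add: fa_def)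
lemma fa_mono: "0 < a \<Longrightarrow> 0 \<le> x \<Longrightarrow> x \<le> y \<Longrightarrow> fa a x \<le> fa a y"
  unfolding fa_def by (simp add: lnp_mono lnp_nonneg powr_mono2)
lemma fa_strict: "0 < a \<Longrightarrow> 1 \<le> x \<Longrightarrow> x < y \<Longrightarrow> fa a x < fa a y"
  unfolding fa_def using lnp_ge1[of x] lnp_ge1[of y]
  by (simp add: powr_less_mono2)

lemma sq_le_fa:
  assumes a: "a > 1"
  shows "\<exists>K0::nat. \<forall>x. x^2 \<le> real K0 + fa a \<bar>x\<bar>"
proof -
  define R where "R = exp (2 powr (1 / (a - 1)))"
  have R1: "R \<ge> 1" unfolding R_def by simp
  obtain K0 :: nat where K0: "R^2 \<le> real K0" by (meson real_nat_ceiling_ge)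
  have "x^2 \<le> real K0 + fa a \<bar>x\<bar>" for x
  proof (cases "\<bar>x\<bar> \<le> R")
    case True
    then have "x^2 \<le> R^2" by (metis abs_ge_zero abs_le_square_iff power2_abs power_mono)
    then show ?thesis using K0 fa_ge1[of a "\<bar>x\<bar>"] by linarith
  next
    case False
    then have xR: "\<bar>x\<bar> > R" by simp
    then have x1: "\<bar>x\<bar> \<ge> 1" using R1 by simp
    have x0: "\<bar>x\<bar> > 0" using x1 by simp
    have "ln (exp (2 powr (1 / (a - 1)))) < ln \<bar>x\<bar>" using xR x0 unfolding R_def
      by (subst ln_less_cancel_iff) auto
    then have lnx: "ln \<bar>x\<bar> > 2 powr (1 / (a - 1))" by simp
    have lnx0: "ln \<bar>x\<bar> > 0" using lnx powr_gt_zero[of 2 "1 / (a - 1)"] by linarith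
    have "(2 powr (1 / (a - 1))) powr (a - 1) \<le> ln \<bar>x\<bar> powr (a - 1)"
      using lnx a by (intro powr_mono2) auto
    then have two: "2 \<le> ln \<bar>x\<bar> powr (a - 1)" using a by (simp add: powr_powr)
    have "ln \<bar>x\<bar> powr a = ln \<bar>x\<bar> powr ((a - 1) + 1)" by simp
    also have "\<dots> = ln \<bar>x\<bar> powr (a - 1) * ln \<bar>x\<bar>"
      using lnx0 powr_add[of "ln \<bar>x\<bar>" "a - 1" 1] by simp
    also have "\<dots> \<ge> 2 * ln \<bar>x\<bar>" using two lnx0 by (simp add: mult_right_mono)
    finally have "2 * ln \<bar>x\<bar> \<le> ln \<bar>x\<bar> powr a" .
    then have "exp (2 * ln \<bar>x\<bar>) \<le> fa a \<bar>x\<bar>" unfolding fa_def using lnp_ge1[OF x1] by simp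
    moreover have "exp (2 * ln \<bar>x\<bar>) = x^2"
    proof -
      have "exp (2 * ln \<bar>x\<bar>) = exp (ln \<bar>x\<bar>) ^ 2" by (rule exp_double)
      then show ?thesis using x0 by simp
    qed
    ultimately show ?thesis by simp
  qed
  then show ?thesis by blast
qed

locale sle_main = sle_seq +
  fixes \<alpha> :: real
  assumes alpha: "\<alpha> > 1"
    and mom_fin: "choquet M \<P> (\<lambda>\<omega>. fa \<alpha> \<bar>X \<omega>\<bar>) < \<infinity>"
    and mean0: "E X = 0" and mean1: "E (\<lambda>\<omega>. - X \<omega>) = 0"
begin

definition Y where "Y \<omega> = fa \<alpha> \<bar>X \<omega>\<bar>"
definition Vc where "Vc x = capacity \<P> {\<omega>\<in>space M. Y \<omega> > x}"
definition Iv where "Iv = (\<integral>\<^sup>+ x\<in>{0..}. Vc x \<partial>lborel)"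

lemma X_meas[measurable]: "X \<in> borel_measurable M" using H_meas[OF XH] .
lemma Y_meas[measurable]: "Y \<in> borel_measurable M"
  unfolding Y_def fa_def lnp_def by measurable

lemma Yset[measurable]: "{\<omega>\<in>space M. Y \<omega> > x} \<in> sets M" by measurable

lemma Vc_anti: "x \<le> y \<Longrightarrow> Vc y \<le> Vc x"
  unfolding Vc_def by (rule cap_mono) auto

lemma Vc_neg: "x < 0 \<Longrightarrow> Vc x = 1"
proof -
  assume "x < 0"
  then have "{\<omega>\<in>space M. Y \<omega> > x} = space M" using fa_ge1 unfolding Y_def
    by (auto intro!: less_le_trans[OF _ fa_ge1])
  then show ?thesis unfolding Vc_def using cap_space by simp
qed

lemma Iv_fin: "Iv < \<infinity>"
proof -
  have "(\<lambda>x. (1 - Vc x) * indicator {..<0} x) = (\<lambda>x. 0)"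
    by (auto simp: fun_eq_iff Vc_neg indicator_def)
  then have "(\<integral>\<^sup>+ x\<in>{..<0}. (1 - Vc x) \<partial>lborel) = 0" by simp
  then have "choquet M \<P> (\<lambda>\<omega>. fa \<alpha> \<bar>X \<omega>\<bar>) = enn2ereal Iv"
    unfolding choquet_def Iv_def Vc_def Y_def by (simp add: zero_ennreal.rep_eq)
  then show ?thesis using mom_fin by (simp add: less_top[symmetric])
qed

lemma Vc_markov:
  assumes s: "s > 0" shows "ennreal s * Vc s \<le> Iv"
proof -
  have "(\<integral>\<^sup>+ x. Vc s * indicator {0..<s} x \<partial>lborel) = Vc s * ennreal s"
    using s by (subst nn_integral_cmult_indicator) auto
  then have "ennreal s * Vc s = (\<integral>\<^sup>+ x. Vc s * indicator {0..<s} x \<partial>lborel)"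
    by (simp add: mult.commute[of "ennreal s"])
  also have "\<dots> \<le> Iv" unfolding Iv_def
    by (intro nn_integral_mono) (auto simp: indicator_def Vc_anti)
  finally show ?thesis .
qed

lemma interval_sum:
  assumes a: "mono a" "a 0 \<ge> 0"
  shows "(\<Sum>n. ennreal (a (Suc n) - a n) * Vc (a (Suc n))) \<le> Iv"
proof -
  have ai: "a n \<le> a (Suc n)" for n using a by (simp add: mono_def)
  have "(\<Sum>n. ennreal (a (Suc n) - a n) * Vc (a (Suc n)))
      = (\<Sum>n. \<integral>\<^sup>+ x. Vc (a (Suc n)) * indicator {a n..<a (Suc n)} x \<partial>lborel)"
  proof (intro suminf_cong)
    fix n
    have "(\<integral>\<^sup>+ x. Vc (a (Suc n)) * indicator {a n..<a (Suc n)} x \<partial>lborel) = Vc (a (Suc n)) * ennreal (a (Suc n) - a n)"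
      using ai[of n] by (subst nn_integral_cmult_indicator) auto
    then show "ennreal (a (Suc n) - a n) * Vc (a (Suc n)) = (\<integral>\<^sup>+ x. Vc (a (Suc n)) * indicator {a n..<a (Suc n)} x \<partial>lborel)"
      by (simp add: mult.commute[of "ennreal _"])
  qed
  also have "\<dots> = (\<integral>\<^sup>+ x. (\<Sum>n. Vc (a (Suc n)) * indicator {a n..<a (Suc n)} x) \<partial>lborel)"
    by (rule nn_integral_suminf[symmetric]) auto
  also have "\<dots> \<le> Iv" unfolding Iv_def
  proof (intro nn_integral_mono)
    fix x :: real
    show "(\<Sum>n. Vc (a (Suc n)) * indicator {a n..<a (Suc n)} x) \<le> Vc x * indicator {0..} x"
    proof (cases "\<exists>n. x \<in> {a n..<a (Suc n)}")
      case False
      then have "(\<Sum>n. Vc (a (Suc n)) * indicator {a n..<a (Suc n)} x) = (\<Sum>n. 0)"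
        by (intro suminf_cong) (auto simp: indicator_def)
      then show ?thesis by simp
    next
      case True
      then obtain n0 where n0: "x \<in> {a n0..<a (Suc n0)}" by blast
      have other: "x \<notin> {a n..<a (Suc n)}" if "n \<noteq> n0" for n
      proof
        assume xn: "x \<in> {a n..<a (Suc n)}"
        show False
        proof (cases "n < n0")
          case True
          then have "a (Suc n) \<le> a n0" using a by (simp add: mono_def)
          then show False using xn n0 by auto
        next
          case False
          then have "n0 < n" using that by simp
          then have "a (Suc n0) \<le> a n" using a by (simp add: mono_def)
          then show False using xn n0 by auto
        qed
      qed
      have "(\<Sum>n. Vc (a (Suc n)) * indicator {a n..<a (Suc n)} x) = (\<Sum>n\<in>{n0}. Vc (a (Suc n)) * indicator {a n..<a (Suc n)} x)"
        using other by (intro suminf_finite) (auto simp: indicator_def)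
      also have "\<dots> = Vc (a (Suc n0))" using n0 by simp
      also have "\<dots> \<le> Vc x" using n0 by (intro Vc_anti) auto
      also have "\<dots> = Vc x * indicator {0..} x"
      proof -
        have "a 0 \<le> a n0" using a by (simp add: mono_def)
        then show ?thesis using n0 a by (simp add: indicator_def)
      qed
      finally show ?thesis .
    qed
  qed
  finally show ?thesis .
qed

end

context sle_main begin

lemma Iv_real: "Iv = ennreal (enn2real Iv)" using Iv_fin by (simp add: ennreal_enn2real_if)

lemma sum_Vc_shift: "(\<Sum>t. Vc (real t - real K)) \<le> ennreal (real K + 1) + Iv"
proof -
  define a where "a n = max 0 (real n - real K - 1)" for n
  have am: "mono a" unfolding a_def mono_def by auto
  have A: "ennreal (a (Suc t) - a t) * Vc (a (Suc t)) = (if K + 1 \<le> t then Vc (real t - real K) else 0)" for t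
    unfolding a_def by (auto simp: max_def)
  define B where "B t = (if t \<le> K then (1::ennreal) else 0)" for t
  have "(\<Sum>t. Vc (real t - real K)) \<le> (\<Sum>t. (if K + 1 \<le> t then Vc (real t - real K) else 0) + B t)"
    by (intro suminf_le allI) (auto simp: B_def Vc_def cap_le_1)
  also have "\<dots> = (\<Sum>t. (if K + 1 \<le> t then Vc (real t - real K) else 0)) + (\<Sum>t. B t)"
    by (rule suminf_add[symmetric]) auto
  also have "(\<Sum>t. (if K + 1 \<le> t then Vc (real t - real K) else 0)) \<le> Iv"
    using interval_sum[OF am] unfolding A by (simp add: a_def)
  also have "(\<Sum>t. B t) = (\<Sum>t\<in>{..K}. B t)" by (rule suminf_finite) (auto simp: B_def)
  also have "\<dots> = ennreal (real K + 1)" by (simp add: B_def ennreal_of_nat_eq_real_of_nat)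
  finally show ?thesis by (simp add: add.commute)
qed

lemma EX2: "\<exists>D2\<ge>0. E (\<lambda>\<omega>. (X \<omega>)^2) \<le> ereal D2"
proof -
  obtain K0 :: nat where K0: "\<And>x. x^2 \<le> real K0 + fa \<alpha> \<bar>x\<bar>" using sq_le_fa[OF alpha] by blast
  define D2 where "D2 = real K0 + 1 + enn2real Iv"
  have D20: "D2 \<ge> 0" unfolding D2_def by simp
  have P: "(\<integral>\<^sup>+ \<omega>. ennreal ((X \<omega>)^2) \<partial>P) \<le> ennreal (real K0 + 1) + Iv" if P: "P \<in> \<P>" for P
  proof -
    define f where "f \<omega> = enat (nat \<lceil>(X \<omega>)^2\<rceil>)" for \<omega>
    have fm: "f \<in> measurable P (count_space UNIV)"
    proof -
      have "f \<in> measurable M (count_space UNIV)" unfolding f_def by measurable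
      then show ?thesis using P_sets[OF P] by (simp add: measurable_def P_space[OF P])
    qed
    have "(\<integral>\<^sup>+ \<omega>. ennreal ((X \<omega>)^2) \<partial>P) \<le> (\<integral>\<^sup>+ \<omega>. ennreal_of_enat (f \<omega>) \<partial>P)"
    proof (intro nn_integral_mono)
      fix \<omega>
      have "(X \<omega>)^2 \<le> real (nat \<lceil>(X \<omega>)^2\<rceil>)" by linarith
      then show "ennreal ((X \<omega>)^2) \<le> ennreal_of_enat (f \<omega>)" unfolding f_def
        by (simp add: ennreal_of_nat_eq_real_of_nat ennreal_leI)
    qed
    also have "\<dots> = (\<Sum>t. emeasure P {\<omega> \<in> space P. enat t < f \<omega>})"
      by (rule nn_integral_enat_function[OF fm])
    also have "\<dots> \<le> (\<Sum>t. Vc (real t - real K0))"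
    proof (intro suminf_le allI)
      fix t
      have "{\<omega> \<in> space P. enat t < f \<omega>} \<subseteq> {\<omega>\<in>space M. Y \<omega> > real t - real K0}"
      proof
        fix \<omega> assume "\<omega> \<in> {\<omega> \<in> space P. enat t < f \<omega>}"
        then have w: "\<omega> \<in> space M" "t < nat \<lceil>(X \<omega>)^2\<rceil>" using P_space[OF P] by (auto simp: f_def)
        then have "real t < (X \<omega>)^2" by linarith
        then show "\<omega> \<in> {\<omega>\<in>space M. Y \<omega> > real t - real K0}" using w K0[of "X \<omega>"] by (auto simp: Y_def)
      qed
      then have "emeasure P {\<omega> \<in> space P. enat t < f \<omega>} \<le> emeasure P {\<omega>\<in>space M. Y \<omega> > real t - real K0}"
        using P by (intro emeasure_mono) (auto simp: P_sets)
      also have "\<dots> \<le> Vc (real t - real K0)" unfolding Vc_def capacity_def using P by (rule SUP_upper)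
      finally show "emeasure P {\<omega> \<in> space P. enat t < f \<omega>} \<le> Vc (real t - real K0)" .
    qed auto
    also have "\<dots> \<le> ennreal (real K0 + 1) + Iv" by (rule sum_Vc_shift)
    finally show ?thesis .
  qed
  have "E (\<lambda>\<omega>. (X \<omega>)^2) = (SUP P\<in>\<P>. ext_expect P (\<lambda>\<omega>. (X \<omega>)^2))" by (rule E_rep[OF H_sq[OF XH]])
  also have "\<dots> \<le> ereal D2"
  proof (rule SUP_least)
    fix P assume PP: "P \<in> \<P>"
    have "ext_expect P (\<lambda>\<omega>. (X \<omega>)^2) = enn2ereal (\<integral>\<^sup>+ \<omega>. ennreal ((X \<omega>)^2) \<partial>P)"
      using ext_nonneg[OF PP] by simp
    also have "\<dots> \<le> enn2ereal (ennreal (real K0 + 1) + Iv)"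
      using P[OF PP] by (simp add: less_eq_ennreal.rep_eq)
    also have "ennreal (real K0 + 1) + Iv = ennreal D2"
      unfolding D2_def by (subst Iv_real) (simp add: ennreal_plus[symmetric] del: ennreal_plus)
    finally show "ext_expect P (\<lambda>\<omega>. (X \<omega>)^2) \<le> ereal D2" using D20 by simp
  qed
  finally show ?thesis using D20 by blast
qed

end

definition gb :: "real \<Rightarrow> real \<Rightarrow> real" where "gb b x = max (- b) (min b x)"
definition phr :: "real \<Rightarrow> real \<Rightarrow> real" where "phr r x = min 1 (max 0 (\<bar>x\<bar> - r + 1))"

lemma gb_lip: "\<bar>gb b x - gb b y\<bar> \<le> 1 * \<bar>x - y\<bar>"
  unfolding gb_def by (auto simp: max_def min_def abs_if)
lemma gb_bound: "b \<ge> 0 \<Longrightarrow> \<bar>gb b x\<bar> \<le> b"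
  unfolding gb_def by (auto simp: max_def min_def abs_if)
lemma gb_sign: "b \<ge> 0 \<Longrightarrow> s \<in> {1, -1} \<Longrightarrow> gb b (s * x) = s * gb b x"
  unfolding gb_def by (auto simp: max_def min_def)
lemma gb_eq: "x \<noteq> gb b x \<Longrightarrow> \<bar>x\<bar> > b"
  unfolding gb_def by (auto simp: max_def min_def split: if_splits)
lemma gb_diff: "b \<ge> 0 \<Longrightarrow> \<bar>x - gb b x\<bar> \<le> \<bar>x\<bar>"
  unfolding gb_def by (auto simp: max_def min_def abs_if)

lemma phr_lip: "\<bar>phr r x - phr r y\<bar> \<le> 1 * \<bar>x - y\<bar>"
  unfolding phr_def by (auto simp: max_def min_def abs_if)
lemma phr_bounds: "0 \<le> phr r x" "phr r x \<le> 1"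
  unfolding phr_def by auto
lemma phr_one: "\<bar>x\<bar> > r \<Longrightarrow> phr r x = 1"
  unfolding phr_def by auto
lemma phr_pos: "phr r x > 0 \<Longrightarrow> \<bar>x\<bar> > r - 1"
  unfolding phr_def by (auto simp: max_def min_def split: if_splits)

lemma exp_lip:
  fixes u v B :: real
  assumes "u \<le> B" "v \<le> B" shows "\<bar>exp u - exp v\<bar> \<le> exp B * \<bar>u - v\<bar>"
proof -
  have *: "exp v - exp u \<le> exp B * (v - u)" if "u \<le> v" "v \<le> B" for u v :: real
  proof -
    have "1 + (u - v) \<le> exp (u - v)" by (rule exp_ge_add_one_self)
    then have "1 - exp (u - v) \<le> v - u" by linarith
    then have "exp v * (1 - exp (u - v)) \<le> exp v * (v - u)" by (simp add: mult_left_mono)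
    also have "\<dots> \<le> exp B * (v - u)" using that by (intro mult_right_mono) auto
    finally show ?thesis by (simp add: algebra_simps exp_diff)
  qed
  show ?thesis
  proof (cases "u \<le> v")
    case True
    then have "\<bar>exp u - exp v\<bar> = exp v - exp u" by simp
    also have "\<dots> \<le> exp B * (v - u)" using *[OF True assms(2)] .
    also have "\<dots> = exp B * \<bar>u - v\<bar>" using True by simp
    finally show ?thesis .
  next
    case False
    then have uv: "v \<le> u" by simp
    then have "\<bar>exp u - exp v\<bar> = exp u - exp v" by simp
    also have "\<dots> \<le> exp B * (u - v)" using *[OF uv assms(1)] .
    also have "\<dots> = exp B * \<bar>u - v\<bar>" using uv by simp
    finally show ?thesis .
  qed
qed

lemma exp_basic: "exp (u::real) \<le> 1 + u + u^2 * exp \<bar>u\<bar>"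
proof -
  obtain t where t: "\<bar>t\<bar> \<le> \<bar>u\<bar>" "exp u = (\<Sum>m<2. u^m / fact m) + exp t / fact 2 * u^2"
    using Maclaurin_exp_le[of u 2] by blast
  have "exp u = 1 + u + exp t / 2 * u^2" using t(2) by (simp add: numeral_2_eq_2)
  also have "exp t / 2 * u^2 \<le> u^2 * exp \<bar>u\<bar>"
  proof -
    have "exp t \<le> exp \<bar>u\<bar>" using t(1) by simp
    moreover have "0 < exp t" by simp
    ultimately have "exp t / 2 \<le> exp \<bar>u\<bar>" by linarith
    then have "u^2 * (exp t / 2) \<le> u^2 * exp \<bar>u\<bar>" by (intro mult_left_mono) auto
    then show ?thesis by (simp add: mult.commute)
  qed
  finally show ?thesis by simp
qed

lemma exp_ineq:
  assumes t: "t > 0" and b: "b > 0"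
  shows "exp (t * gb b y) \<le> 1 + t * y + (t / b + t^2 * exp (t * b)) * y^2"
proof -
  have nn: "0 \<le> t / b * y^2" using t b by simp
  consider "\<bar>y\<bar> \<le> b" | "y > b" | "y < - b" by linarith
  then show ?thesis
  proof cases
    case 1
    then have g: "gb b y = y" using b unfolding gb_def by auto
    have "exp (t * y) \<le> 1 + t * y + (t * y)^2 * exp \<bar>t * y\<bar>" by (rule exp_basic)
    also have "(t * y)^2 * exp \<bar>t * y\<bar> \<le> t^2 * exp (t * b) * y^2"
    proof -
      have "\<bar>t * y\<bar> \<le> t * b" using 1 t by (simp add: abs_mult mult_left_mono)
      then have "exp \<bar>t * y\<bar> \<le> exp (t * b)" by simp
      then have "t^2 * y^2 * exp \<bar>t * y\<bar> \<le> t^2 * y^2 * exp (t * b)" by (intro mult_left_mono) auto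
      then show ?thesis by (simp add: power_mult_distrib mult.commute mult.left_commute)
    qed
    finally show ?thesis using g nn by (simp add: algebra_simps)
  next
    case 2
    then have g: "gb b y = b" using b unfolding gb_def by auto
    have "exp (t * b) \<le> 1 + t * b + (t * b)^2 * exp \<bar>t * b\<bar>" by (rule exp_basic)
    also have "\<dots> \<le> 1 + t * y + t^2 * exp (t * b) * y^2"
    proof -
      have "t * b \<le> t * y" using 2 t by simp
      moreover have "b^2 \<le> y^2" using 2 b by (simp add: power_mono)
      then have "(t * b)^2 * exp \<bar>t * b\<bar> \<le> t^2 * exp (t * b) * y^2" using t b
        by (simp add: power_mult_distrib mult_left_mono mult.commute mult.left_commute)
      ultimately show ?thesis by simp
    qed
    finally show ?thesis using g nn by (simp add: algebra_simps)
  next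
    case 3
    then have g: "gb b y = - b" using b unfolding gb_def by auto
    have "exp (- (t * b)) \<le> 1 + - (t * b) + (- (t * b))^2 * exp \<bar>- (t * b)\<bar>" by (rule exp_basic)
    also have "\<dots> \<le> 1 + t * y + t / b * y^2 + t^2 * exp (t * b) * y^2"
    proof -
      have "y^2 + b * y + b^2 \<ge> 0"
      proof -
        have "y^2 + b * y + b^2 = (y + b/2)^2 + 3/4 * b^2" by (simp add: power2_eq_square algebra_simps)
        then show ?thesis using zero_le_power2[of "y + b/2"] zero_le_power2[of b] by linarith
      qed
      then have "0 \<le> t / b * (y^2 + b * y + b^2)" using t b by simp
      then have "- (t * b) \<le> t * y + t / b * y^2" using b by (simp add: algebra_simps power2_eq_square)
      moreover have "\<bar>b\<bar> \<le> \<bar>y\<bar>" using 3 b by simp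
      then have "b^2 \<le> y^2" by (simp add: abs_le_square_iff)
      then have "t^2 * b^2 \<le> t^2 * y^2" by (intro mult_left_mono) auto
      then have "t^2 * b^2 * exp (t * b) \<le> t^2 * y^2 * exp (t * b)" by (intro mult_right_mono) auto
      then have "(t * b)^2 * exp \<bar>- (t * b)\<bar> \<le> t^2 * exp (t * b) * y^2" using t b
        by (simp add: power_mult_distrib abs_mult mult.commute mult.left_commute)
      moreover have "(- (t * b))^2 * exp \<bar>- (t * b)\<bar> = (t * b)^2 * exp \<bar>- (t * b)\<bar>" by simp
      ultimately show ?thesis by linarith
    qed
    finally show ?thesis using g by (simp add: algebra_simps)
  qed
qed

context sle_main begin

lemma Xs_meas[measurable]: "k \<ge> 1 \<Longrightarrow> Xs k \<in> borel_measurable M" using H_meas[OF XsH] .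

lemma H_negX: "(\<lambda>\<omega>. - X \<omega>) \<in> H" using H_lip1[OF XH, of uminus 1] by simp

lemma cap_Xs_tail:
  assumes k: "k \<ge> 1"
  shows "capacity \<P> {\<omega>\<in>space M. \<bar>Xs k \<omega>\<bar> > r} \<le> capacity \<P> {\<omega>\<in>space M. \<bar>X \<omega>\<bar> > r - 1}"
proof -
  have ZX: "(\<lambda>\<omega>. phr r (X \<omega>)) \<in> H" using H_lip1[OF XH phr_lip] .
  have Zk: "(\<lambda>\<omega>. phr r (Xs k \<omega>)) \<in> H" using H_lip1[OF XsH[OF k] phr_lip] .
  have b: "ereal 0 \<le> E (\<lambda>\<omega>. phr r (X \<omega>))" "E (\<lambda>\<omega>. phr r (X \<omega>)) \<le> ereal 1"
    using E_bounds[OF ZX, of 0 1] phr_bounds by auto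
  then obtain e where e: "E (\<lambda>\<omega>. phr r (X \<omega>)) = ereal e" "0 \<le> e"
    by (cases "E (\<lambda>\<omega>. phr r (X \<omega>))") auto
  have ek: "E (\<lambda>\<omega>. phr r (Xs k \<omega>)) = ereal e" using ident_E[OF k, of "phr r" 1] e phr_lip by simp
  have "capacity \<P> {\<omega>\<in>space M. \<bar>Xs k \<omega>\<bar> > r} \<le> ennreal e"
    using k by (intro cap_le_E[OF Zk]) (auto simp: phr_bounds phr_one ek)
  also have "ennreal e \<le> capacity \<P> {\<omega>\<in>space M. \<bar>X \<omega>\<bar> > r - 1}"
  proof -
    have "ereal e \<le> enn2ereal (capacity \<P> {\<omega>\<in>space M. \<bar>X \<omega>\<bar> > r - 1})"
      unfolding e(1)[symmetric] by (intro E_le_cap[OF ZX]) (auto simp: phr_bounds phr_pos)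
    then have "e2ennreal (ereal e) \<le> e2ennreal (enn2ereal (capacity \<P> {\<omega>\<in>space M. \<bar>X \<omega>\<bar> > r - 1}))"
      by (rule e2ennreal_mono)
    then show ?thesis by simp
  qed
  finally show ?thesis .
qed

end

context sle_main begin

lemma cap_pair:
  assumes ij: "1 \<le> i" "i < j"
  shows "capacity \<P> {\<omega>\<in>space M. \<bar>Xs i \<omega>\<bar> > b \<and> \<bar>Xs j \<omega>\<bar> > b} \<le> ennreal ((real_of_ereal (E (\<lambda>\<omega>. phr b (X \<omega>))))^2)"
proof -
  define h where "h k = (if k = i \<or> k = j then phr b else (\<lambda>_. 1::real))" for k
  have hb: "0 \<le> h k x \<and> h k x \<le> 1" for k x unfolding h_def by (auto simp: phr_bounds)
  have hl: "\<bar>h k x - h k y\<bar> \<le> 1 * \<bar>x - y\<bar>" for k x y unfolding h_def using phr_lip by auto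
  define Z where "Z \<omega> = (\<Prod>i'<j. h (Suc i') (Xs (Suc i') \<omega>))" for \<omega>
  have PE: "Z \<in> H" "E Z = ereal (\<Prod>i'<j. real_of_ereal (E (\<lambda>\<omega>. h (Suc i') (X \<omega>))))"
    using prod_E[where h=h and B=1 and Lc=1 and n=j, OF hb hl] unfolding Z_def by (auto simp: fun_eq_iff)
  define e where "e = real_of_ereal (E (\<lambda>\<omega>. phr b (X \<omega>)))"
  have fac: "real_of_ereal (E (\<lambda>\<omega>. h (Suc i') (X \<omega>))) = (if Suc i' = i \<or> Suc i' = j then e else 1)" for i'
    unfolding h_def e_def by auto
  have S: "{..<j} \<inter> {i'. Suc i' = i \<or> Suc i' = j} = {i - 1, j - 1}" using ij by auto
  have c: "card {i - 1, j - 1} = 2" using ij by auto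
  have "(\<Prod>i'<j. real_of_ereal (E (\<lambda>\<omega>. h (Suc i') (X \<omega>)))) = (\<Prod>i'<j. if Suc i' = i \<or> Suc i' = j then e else 1)"
    by (simp add: fac)
  also have "\<dots> = (\<Prod>i'\<in>{..<j} \<inter> {i'. Suc i' = i \<or> Suc i' = j}. e) * (\<Prod>i'\<in>{..<j} \<inter> - {i'. Suc i' = i \<or> Suc i' = j}. 1)"
    by (rule prod.If_cases) simp
  also have "\<dots> = e^2" unfolding S using c by simp
  finally have prodv: "(\<Prod>i'<j. real_of_ereal (E (\<lambda>\<omega>. h (Suc i') (X \<omega>)))) = e^2" .
  show ?thesis unfolding e_def[symmetric]
  proof (rule cap_le_E[OF PE(1)])
    show "0 \<le> Z \<omega>" for \<omega> unfolding Z_def using hb by (simp add: prod_nonneg)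
    have [measurable]: "Xs i \<in> borel_measurable M" "Xs j \<in> borel_measurable M" using ij by (auto intro: Xs_meas)
    show "{\<omega>\<in>space M. \<bar>Xs i \<omega>\<bar> > b \<and> \<bar>Xs j \<omega>\<bar> > b} \<in> sets M" by measurable
    show "E Z \<le> ereal (e^2)" using PE(2) prodv by simp
    fix \<omega> assume w: "\<omega> \<in> {\<omega>\<in>space M. \<bar>Xs i \<omega>\<bar> > b \<and> \<bar>Xs j \<omega>\<bar> > b}"
    have "Z \<omega> = (\<Prod>i'<j. 1)" unfolding Z_def
      by (intro prod.cong refl) (use w in \<open>auto simp: h_def phr_one\<close>)
    then show "1 \<le> Z \<omega>" by simp
  qed
qed

lemma EexpB:
  assumes D2: "E (\<lambda>\<omega>. (X \<omega>)^2) \<le> ereal D2" and s: "s \<in> {1, -1}" and t: "t > 0" and b: "b > 0"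
  shows "E (\<lambda>\<omega>. exp (t * gb b (s * X \<omega>))) \<le> ereal (1 + (t / b + t^2 * exp (t * b)) * D2)"
proof -
  define K where "K = t / b + t^2 * exp (t * b)"
  have K0: "K > 0" unfolding K_def using t b by (intro add_pos_pos) auto
  define Z1 where "Z1 \<omega> = (t * s) * X \<omega>" for \<omega>
  define Z2 where "Z2 \<omega> = K * (X \<omega>)^2" for \<omega>
  have Z1H: "Z1 \<in> H" unfolding Z1_def by (rule H_cmult[OF XH])
  have X2H: "(\<lambda>\<omega>. (X \<omega>)^2) \<in> H" by (rule H_sq[OF XH])
  have Z2H: "Z2 \<in> H" unfolding Z2_def by (rule H_cmult[OF X2H])
  have s2: "s^2 = 1" using s by auto
  have gH: "(\<lambda>\<omega>. exp (t * gb b (s * X \<omega>))) \<in> H"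
  proof -
    have "\<bar>exp (t * gb b (s * x)) - exp (t * gb b (s * y))\<bar> \<le> (exp (t * b) * t) * \<bar>x - y\<bar>" for x y
    proof -
      have "\<bar>exp (t * gb b (s * x)) - exp (t * gb b (s * y))\<bar> \<le> exp (t * b) * \<bar>t * gb b (s * x) - t * gb b (s * y)\<bar>"
        using gb_bound[of b] b t by (intro exp_lip) (auto simp: abs_le_iff mult_left_mono)
      also have "\<bar>t * gb b (s * x) - t * gb b (s * y)\<bar> \<le> t * \<bar>x - y\<bar>"
      proof -
        have "\<bar>gb b (s * x) - gb b (s * y)\<bar> \<le> \<bar>s * x - s * y\<bar>" using gb_lip[of b "s * x" "s * y"] by simp
        also have "\<dots> = \<bar>x - y\<bar>" using s by (auto simp: abs_minus_commute)
        finally show ?thesis using t by (simp add: abs_mult right_diff_distrib[symmetric] mult_left_mono)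
      qed
      finally show ?thesis by (simp add: mult_left_mono mult.assoc)
    qed
    then show ?thesis by (rule H_lip1[OF XH])
  qed
  have c1: "E (\<lambda>\<omega>. exp (t * gb b (s * X \<omega>))) \<le> E (\<lambda>\<omega>. 1 + (Z1 \<omega> + Z2 \<omega>))"
  proof (rule E_mono[OF gH])
    show "(\<lambda>\<omega>. 1 + (Z1 \<omega> + Z2 \<omega>)) \<in> H" by (intro H_add H_const Z1H Z2H)
    fix \<omega>
    have "exp (t * gb b (s * X \<omega>)) \<le> 1 + t * (s * X \<omega>) + K * (s * X \<omega>)^2"
      unfolding K_def by (rule exp_ineq[OF t b])
    also have "\<dots> = 1 + (Z1 \<omega> + Z2 \<omega>)" unfolding Z1_def Z2_def
      by (simp add: power_mult_distrib s2)
    finally show "exp (t * gb b (s * X \<omega>)) \<le> 1 + (Z1 \<omega> + Z2 \<omega>)" .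
  qed
  have c2: "E (\<lambda>\<omega>. 1 + (Z1 \<omega> + Z2 \<omega>)) \<le> E (\<lambda>_. 1) + E (\<lambda>\<omega>. Z1 \<omega> + Z2 \<omega>)"
    by (rule E_add[OF H_const H_add[OF Z1H Z2H]]) simp
  have EZ1: "E Z1 = 0"
  proof (cases "s = 1")
    case True
    then show ?thesis unfolding Z1_def using E_hom[OF XH t] mean0 by simp
  next
    case False
    then have "s = -1" using s by auto
    then have "Z1 = (\<lambda>\<omega>. t * (- X \<omega>))" unfolding Z1_def by auto
    then show ?thesis using E_hom[OF H_negX t] mean1 by simp
  qed
  have c3: "E (\<lambda>\<omega>. Z1 \<omega> + Z2 \<omega>) \<le> E Z1 + E Z2"
    using EZ1 by (intro E_add[OF Z1H Z2H]) simp
  have c4: "E Z2 \<le> ereal (K * D2)"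
  proof -
    have "E Z2 = ereal K * E (\<lambda>\<omega>. (X \<omega>)^2)" unfolding Z2_def by (rule E_hom[OF X2H K0])
    also have "\<dots> \<le> ereal K * ereal D2" using K0 D2 by (intro ereal_mult_left_mono) auto
    finally show ?thesis by simp
  qed
  have c5: "E (\<lambda>\<omega>. Z1 \<omega> + Z2 \<omega>) \<le> ereal (K * D2)" using c3 c4 EZ1 by simp
  have "E (\<lambda>_. 1) + E (\<lambda>\<omega>. Z1 \<omega> + Z2 \<omega>) \<le> ereal 1 + ereal (K * D2)"
    using add_left_mono[OF c5, of "ereal 1"] by simp
  then have "E (\<lambda>_. 1) + E (\<lambda>\<omega>. Z1 \<omega> + Z2 \<omega>) \<le> ereal (1 + K * D2)" by simp
  then show ?thesis using c1 c2 unfolding K_def by (meson order_trans)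
qed

lemma cap_B3:
  assumes D2: "E (\<lambda>\<omega>. (X \<omega>)^2) \<le> ereal D2" and s: "s \<in> {1, -1}" and t: "t > 0" and b: "b > 0"
  shows "capacity \<P> {\<omega>\<in>space M. s * (\<Sum>k=1..m. gb b (Xs k \<omega>)) > x}
           \<le> ennreal (exp (- (t * x)) * (1 + (t / b + t^2 * exp (t * b)) * D2)^m)"
proof -
  define q where "q = 1 + (t / b + t^2 * exp (t * b)) * D2"
  define h where "h k y = exp (t * gb b (s * y))" for k :: nat and y
  have hb: "0 \<le> h k y \<and> h k y \<le> exp (t * b)" for k y
  proof -
    have "\<bar>gb b (s * y)\<bar> \<le> b" using b gb_bound by simp
    then have "t * gb b (s * y) \<le> t * b" using t by (simp add: abs_le_iff mult_left_mono)
    then show ?thesis unfolding h_def by simp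
  qed
  have hl: "\<bar>h k x - h k y\<bar> \<le> (exp (t * b) * t) * \<bar>x - y\<bar>" for k x y
  proof -
    have "\<bar>h k x - h k y\<bar> \<le> exp (t * b) * \<bar>t * gb b (s * x) - t * gb b (s * y)\<bar>"
      unfolding h_def using gb_bound[of b] b t by (intro exp_lip) (auto simp: abs_le_iff mult_left_mono)
    also have "\<bar>t * gb b (s * x) - t * gb b (s * y)\<bar> \<le> t * \<bar>x - y\<bar>"
    proof -
      have "\<bar>gb b (s * x) - gb b (s * y)\<bar> \<le> \<bar>s * x - s * y\<bar>" using gb_lip[of b "s * x" "s * y"] by simp
      also have "\<dots> = \<bar>x - y\<bar>" using s by (auto simp: abs_minus_commute)
      finally show ?thesis using t by (simp add: abs_mult right_diff_distrib[symmetric] mult_left_mono)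
    qed
    finally show ?thesis by (simp add: mult_left_mono mult.assoc)
  qed
  define Pr where "Pr \<omega> = (\<Prod>i<m. h (Suc i) (Xs (Suc i) \<omega>))" for \<omega>
  have PE: "Pr \<in> H" "E Pr = ereal (\<Prod>i<m. real_of_ereal (E (\<lambda>\<omega>. h (Suc i) (X \<omega>))))"
    using prod_E[where h=h and B="exp (t * b)" and Lc="exp (t * b) * t" and n=m, OF hb hl] unfolding Pr_def by (auto simp: fun_eq_iff)
  obtain D2' where "E (\<lambda>\<omega>. h 0 (X \<omega>)) \<le> ereal q" "ereal 0 \<le> E (\<lambda>\<omega>. h 0 (X \<omega>))"
    unfolding h_def q_def
    using EexpB[OF D2 s t b] E_bounds(1)[of "\<lambda>\<omega>. exp (t * gb b (s * X \<omega>))" 0] H_lip1[OF XH, of "h 0"] hl hb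
    by (fastforce simp: h_def)
  then have fac: "0 \<le> real_of_ereal (E (\<lambda>\<omega>. h k (X \<omega>))) \<and> real_of_ereal (E (\<lambda>\<omega>. h k (X \<omega>))) \<le> q" for k
    unfolding h_def by (cases "E (\<lambda>\<omega>. exp (t * gb b (s * X \<omega>)))") auto
  have q0: "0 \<le> q" using fac[of 0] by linarith
  have "(\<Prod>i<m. real_of_ereal (E (\<lambda>\<omega>. h (Suc i) (X \<omega>)))) \<le> (\<Prod>i<m. q)"
    using fac by (intro prod_mono) auto
  then have Epr: "E Pr \<le> ereal (q^m)" using PE(2) by simp
  define Z where "Z \<omega> = exp (- (t * x)) * Pr \<omega>" for \<omega>
  have ZH: "Z \<in> H" unfolding Z_def by (rule H_cmult[OF PE(1)])
  have EZ: "E Z = ereal (exp (- (t * x))) * E Pr" unfolding Z_def by (rule E_hom[OF PE(1)]) simp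
  show ?thesis unfolding q_def[symmetric]
  proof (rule cap_le_E[OF ZH])
    show "0 \<le> Z \<omega>" for \<omega> unfolding Z_def Pr_def using hb by (simp add: prod_nonneg)
    have gm: "(\<lambda>\<omega>. s * (\<Sum>k=1..m. gb b (Xs k \<omega>))) \<in> borel_measurable M"
    proof -
      have "(\<lambda>\<omega>. gb b (Xs k \<omega>)) \<in> borel_measurable M" if "k \<in> {1..m}" for k
      proof -
        have Xk[measurable]: "Xs k \<in> borel_measurable M" using that by (intro Xs_meas) auto
        show ?thesis unfolding gb_def by measurable
      qed
      then show ?thesis by (intro borel_measurable_times borel_measurable_const borel_measurable_sum) auto
    qed
    show "{\<omega>\<in>space M. s * (\<Sum>k=1..m. gb b (Xs k \<omega>)) > x} \<in> sets M" using gm by measurable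
    show "E Z \<le> ereal (exp (- (t * x)) * q^m)" unfolding EZ using Epr
      by (metis ereal_mult_left_mono exp_ge_zero ereal_less_eq(5) times_ereal.simps(1))
    fix \<omega> assume w: "\<omega> \<in> {\<omega>\<in>space M. s * (\<Sum>k=1..m. gb b (Xs k \<omega>)) > x}"
    have "Pr \<omega> = exp (\<Sum>i<m. t * gb b (s * Xs (Suc i) \<omega>))" unfolding Pr_def h_def by (simp add: exp_sum)
    also have "(\<Sum>i<m. t * gb b (s * Xs (Suc i) \<omega>)) = t * (s * (\<Sum>k=1..m. gb b (Xs k \<omega>)))"
      using gb_sign[of b s] b s by (simp add: sum_distrib_left sum.atLeast1_atMost_eq mult.assoc)
    finally have "Pr \<omega> = exp (t * (s * (\<Sum>k=1..m. gb b (Xs k \<omega>))))" .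
    moreover have "t * x \<le> t * (s * (\<Sum>k=1..m. gb b (Xs k \<omega>)))" using w t by (simp add: mult_left_mono)
    ultimately have "exp (t * x) \<le> Pr \<omega>" by simp
    then show "1 \<le> Z \<omega>" unfolding Z_def by (simp add: exp_minus field_simps)
  qed
qed

end

context sle_main begin

lemma main_event:
  fixes m :: nat and \<eta> \<epsilon> b D2 :: real
  assumes eta: "\<eta> > 0" and eps: "\<epsilon> = 1 + 3 * \<eta>" and m1: "m \<ge> 1" and meta: "real m * \<eta> \<ge> 1"
    and b: "b \<ge> 2" and D2: "E (\<lambda>\<omega>. (X \<omega>)^2) \<le> ereal D2"
  shows "capacity \<P> {\<omega>\<in>space M. \<bar>\<Sum>k=1..m. Xs k \<omega>\<bar> > real m * \<epsilon>}
     \<le> ennreal (real m) * Vc (fa \<alpha> (real m))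
       + ennreal (real m ^ 2 * (real_of_ereal (E (\<lambda>\<omega>. phr b (X \<omega>))))^2)
       + 2 * ennreal (exp (- ((1 / b) * (real m * \<eta>))) * (1 + (1 / b / b + (1 / b)^2 * exp (1 / b * b)) * D2)^m)"
proof -
  define A where "A = {\<omega>\<in>space M. \<bar>\<Sum>k=1..m. Xs k \<omega>\<bar> > real m * \<epsilon>}"
  define B1k where "B1k k = {\<omega>\<in>space M. \<bar>Xs k \<omega>\<bar> > real m * (1 + \<eta>)}" for k
  define B1 where "B1 = (\<Union>k\<in>{1..m}. B1k k)"
  define Prs where "Prs = {(i, j). 1 \<le> i \<and> i < j \<and> j \<le> m}"
  define B2p where "B2p p = {\<omega>\<in>space M. \<bar>Xs (fst p) \<omega>\<bar> > b \<and> \<bar>Xs (snd p) \<omega>\<bar> > b}" for p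
  define B2 where "B2 = (\<Union>p\<in>Prs. B2p p)"
  define B3 where "B3 s = {\<omega>\<in>space M. s * (\<Sum>k=1..m. gb b (Xs k \<omega>)) > real m * \<eta>}" for s
  have b0: "b > 0" using b by simp
  have Xk[measurable]: "Xs k \<in> borel_measurable M" if "k \<in> {1..m}" for k using that by (intro Xs_meas) auto
  have B1k_m: "B1k k \<in> sets M" if "k \<in> {1..m}" for k using that unfolding B1k_def by measurable
  have B1_m: "B1 \<in> sets M" unfolding B1_def using B1k_m by auto
  have finPrs: "finite Prs" by (rule finite_subset[of _ "{1..m} \<times> {1..m}"]) (auto simp: Prs_def)
  have B2p_m: "B2p p \<in> sets M" if "p \<in> Prs" for p
  proof -
    have [measurable]: "Xs (fst p) \<in> borel_measurable M" "Xs (snd p) \<in> borel_measurable M"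
      using that by (auto simp: Prs_def intro!: Xs_meas)
    show ?thesis unfolding B2p_def by measurable
  qed
  have B2_m: "B2 \<in> sets M" unfolding B2_def using B2p_m finPrs by auto
  have gm: "(\<lambda>\<omega>. s * (\<Sum>k=1..m. gb b (Xs k \<omega>))) \<in> borel_measurable M" for s
  proof -
    have "(\<lambda>\<omega>. gb b (Xs k \<omega>)) \<in> borel_measurable M" if "k \<in> {1..m}" for k
    proof -
      have [measurable]: "Xs k \<in> borel_measurable M" using that by (intro Xs_meas) auto
      show ?thesis unfolding gb_def by measurable
    qed
    then show ?thesis by (intro borel_measurable_times borel_measurable_const borel_measurable_sum) auto
  qed
  have B3_m: "B3 s \<in> sets M" for s unfolding B3_def using gm[of s] by measurable
  have incl: "A \<subseteq> B1 \<union> B2 \<union> B3 1 \<union> B3 (-1)"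
  proof
    fix \<omega> assume wA: "\<omega> \<in> A"
    show "\<omega> \<in> B1 \<union> B2 \<union> B3 1 \<union> B3 (-1)"
    proof (rule ccontr)
      assume nin: "\<omega> \<notin> B1 \<union> B2 \<union> B3 1 \<union> B3 (-1)"
      have w: "\<omega> \<in> space M" using wA by (simp add: A_def)
      define d where "d k = Xs k \<omega> - gb b (Xs k \<omega>)" for k
      have small: "\<bar>Xs k \<omega>\<bar> \<le> real m * (1 + \<eta>)" if "k \<in> {1..m}" for k
        using nin that w by (auto simp: B1_def B1k_def not_less)
      have dbig: "\<bar>Xs k \<omega>\<bar> > b" if "d k \<noteq> 0" for k using that gb_eq[of "Xs k \<omega>" b] by (auto simp: d_def)
      have sumd: "\<bar>\<Sum>k=1..m. d k\<bar> \<le> real m * (1 + \<eta>)"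
      proof (cases "\<exists>k0\<in>{1..m}. d k0 \<noteq> 0")
        case False
        then have "(\<Sum>k=1..m. d k) = 0" by (intro sum.neutral) auto
        then show ?thesis using eta by simp
      next
        case True
        then obtain k0 where k0: "k0 \<in> {1..m}" "d k0 \<noteq> 0" by blast
        have others: "d k = 0" if "k \<in> {1..m} - {k0}" for k
        proof (rule ccontr)
          assume "d k \<noteq> 0"
          then have "\<bar>Xs k \<omega>\<bar> > b" "\<bar>Xs k0 \<omega>\<bar> > b" using dbig k0 by auto
          moreover have "(min k k0, max k k0) \<in> Prs" using that k0 by (auto simp: Prs_def min_def max_def)
          ultimately have "\<omega> \<in> B2p (min k k0, max k k0)" using w by (auto simp: B2p_def min_def max_def)
          then have "\<omega> \<in> B2" unfolding B2_def using \<open>(min k k0, max k k0) \<in> Prs\<close> by blast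
          then show False using nin by blast
        qed
        have "(\<Sum>k=1..m. d k) = d k0 + (\<Sum>k\<in>{1..m} - {k0}. d k)"
          using k0 by (simp add: sum.remove)
        also have "(\<Sum>k\<in>{1..m} - {k0}. d k) = 0" using others by (intro sum.neutral) auto
        finally have "(\<Sum>k=1..m. d k) = d k0" by simp
        moreover have "\<bar>d k0\<bar> \<le> \<bar>Xs k0 \<omega>\<bar>" unfolding d_def using gb_diff b0 by simp
        ultimately show ?thesis using small[OF k0(1)] by simp
      qed
      have "(\<Sum>k=1..m. Xs k \<omega>) = (\<Sum>k=1..m. gb b (Xs k \<omega>)) + (\<Sum>k=1..m. d k)"
        by (simp add: d_def sum.distrib[symmetric])
      moreover have "\<bar>\<Sum>k=1..m. Xs k \<omega>\<bar> > real m * \<epsilon>" using wA by (simp add: A_def)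
      ultimately have "\<bar>\<Sum>k=1..m. gb b (Xs k \<omega>)\<bar> > real m * \<epsilon> - real m * (1 + \<eta>)" using sumd by linarith
      moreover have "real m * \<epsilon> - real m * (1 + \<eta>) = 2 * (real m * \<eta>)" using eps by (simp add: algebra_simps)
      moreover have "real m * \<eta> \<ge> 0" using eta by simp
      ultimately have "(\<Sum>k=1..m. gb b (Xs k \<omega>)) > real m * \<eta> \<or> - (\<Sum>k=1..m. gb b (Xs k \<omega>)) > real m * \<eta>"
        by linarith
      then have "\<omega> \<in> B3 1 \<or> \<omega> \<in> B3 (-1)" using w by (auto simp: B3_def)
      then show False using nin by blast
    qed
  qed
  have capA: "capacity \<P> A \<le> capacity \<P> B1 + capacity \<P> B2 + capacity \<P> (B3 1) + capacity \<P> (B3 (-1))"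
  proof -
    have "capacity \<P> A \<le> capacity \<P> (B1 \<union> B2 \<union> B3 1 \<union> B3 (-1))"
      using incl B1_m B2_m B3_m by (intro cap_mono) auto
    also have "\<dots> \<le> capacity \<P> (B1 \<union> B2 \<union> B3 1) + capacity \<P> (B3 (-1))"
      using B1_m B2_m B3_m by (intro cap_Un) auto
    also have "capacity \<P> (B1 \<union> B2 \<union> B3 1) \<le> capacity \<P> (B1 \<union> B2) + capacity \<P> (B3 1)"
      using B1_m B2_m B3_m by (intro cap_Un) auto
    also have "capacity \<P> (B1 \<union> B2) \<le> capacity \<P> B1 + capacity \<P> B2"
      using B1_m B2_m by (intro cap_Un) auto
    finally show ?thesis by (simp add: add_right_mono add_mono)
  qed
  have cap1: "capacity \<P> B1 \<le> ennreal (real m) * Vc (fa \<alpha> (real m))"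
  proof -
    have "capacity \<P> B1 \<le> (\<Sum>k\<in>{1..m}. capacity \<P> (B1k k))"
      unfolding B1_def using B1k_m by (intro cap_UN) auto
    also have "\<dots> \<le> (\<Sum>k\<in>{1..m}. Vc (fa \<alpha> (real m)))"
    proof (intro sum_mono)
      fix k assume k: "k \<in> {1..m}"
      have "capacity \<P> (B1k k) \<le> capacity \<P> {\<omega>\<in>space M. \<bar>X \<omega>\<bar> > real m * (1 + \<eta>) - 1}"
        unfolding B1k_def using k by (intro cap_Xs_tail) auto
      also have "\<dots> \<le> Vc (fa \<alpha> (real m))" unfolding Vc_def
      proof (intro cap_mono)
        show "{\<omega>\<in>space M. \<bar>X \<omega>\<bar> > real m * (1 + \<eta>) - 1} \<subseteq> {\<omega>\<in>space M. Y \<omega> > fa \<alpha> (real m)}"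
        proof safe
          fix \<omega> assume "\<omega> \<in> space M" "\<bar>X \<omega>\<bar> > real m * (1 + \<eta>) - 1"
          then have "\<bar>X \<omega>\<bar> > real m" using meta by (simp add: algebra_simps)
          then show "Y \<omega> > fa \<alpha> (real m)" unfolding Y_def using m1 alpha by (intro fa_strict) auto
        qed
      qed simp
      finally show "capacity \<P> (B1k k) \<le> Vc (fa \<alpha> (real m))" .
    qed
    also have "\<dots> = ennreal (real m) * Vc (fa \<alpha> (real m))" by (simp add: ennreal_of_nat_eq_real_of_nat)
    finally show ?thesis .
  qed
  define e where "e = real_of_ereal (E (\<lambda>\<omega>. phr b (X \<omega>)))"
  have cap2: "capacity \<P> B2 \<le> ennreal (real m ^ 2 * e^2)"
  proof -
    have "capacity \<P> B2 \<le> (\<Sum>p\<in>Prs. capacity \<P> (B2p p))"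
      unfolding B2_def using B2p_m finPrs by (intro cap_UN) auto
    also have "\<dots> \<le> (\<Sum>p\<in>Prs. ennreal (e^2))"
      unfolding e_def B2p_def by (intro sum_mono) (auto simp: Prs_def intro!: cap_pair)
    also have "\<dots> = ennreal (real (card Prs) * e^2)" by (simp add: ennreal_mult ennreal_of_nat_eq_real_of_nat)
    also have "\<dots> \<le> ennreal (real m ^ 2 * e^2)"
    proof -
      have "card Prs \<le> card ({1..m} \<times> {1..m})" by (rule card_mono) (auto simp: Prs_def)
      then have "card Prs \<le> m * m" by simp
      then have "real (card Prs) \<le> real (m * m)" by (simp only: of_nat_le_iff)
      then have "real (card Prs) \<le> real m ^ 2" by (simp add: power2_eq_square)
      then show ?thesis by (intro ennreal_leI mult_right_mono) auto
    qed
    finally show ?thesis .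
  qed
  have cap3: "capacity \<P> (B3 s) \<le> ennreal (exp (- ((1 / b) * (real m * \<eta>))) * (1 + (1 / b / b + (1 / b)^2 * exp (1 / b * b)) * D2)^m)"
    if "s \<in> {1, -1}" for s
    unfolding B3_def using cap_B3[where t="1 / b" and m=m and x="real m * \<eta>", OF D2 that _ b0] b0 by simp
  have "capacity \<P> A \<le> ennreal (real m) * Vc (fa \<alpha> (real m)) + ennreal (real m ^ 2 * e^2)
      + ennreal (exp (- ((1 / b) * (real m * \<eta>))) * (1 + (1 / b / b + (1 / b)^2 * exp (1 / b * b)) * D2)^m)
      + ennreal (exp (- ((1 / b) * (real m * \<eta>))) * (1 + (1 / b / b + (1 / b)^2 * exp (1 / b * b)) * D2)^m)"
    using order_trans[OF capA add_mono[OF add_mono[OF add_mono[OF cap1 cap2] cap3[of 1]] cap3[of "-1"]]] by simp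
  then show ?thesis unfolding A_def e_def by (simp add: mult_2 add.assoc)
qed

end

lemma c0_facts:
  assumes a: "\<alpha> > 1"
  shows "7/8 \<le> (7/8::real) powr (1/\<alpha>)" "(7/8::real) powr (1/\<alpha>) < 1" "((7/8::real) powr (1/\<alpha>)) powr \<alpha> = 7/8"
proof -
  have l: "ln (7/8::real) < 0" by simp
  have c: "(7/8::real) powr (1/\<alpha>) = exp (1/\<alpha> * ln (7/8))" by (simp add: powr_def)
  have "1/\<alpha> * ln (7/8::real) \<ge> ln (7/8)"
  proof -
    have "1/\<alpha> \<le> 1" using a by simp
    then have "1/\<alpha> * ln (7/8::real) \<ge> 1 * ln (7/8)" using l by (intro mult_right_mono_neg) auto
    then show ?thesis by simp
  qed
  then have "exp (ln (7/8::real)) \<le> exp (1/\<alpha> * ln (7/8))" by (simp only: exp_le_cancel_iff)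
  moreover have "exp (ln (7/8::real)) = 7/8" by simp
  ultimately show "7/8 \<le> (7/8::real) powr (1/\<alpha>)" unfolding c by linarith
  have "1/\<alpha> * ln (7/8::real) < 0" using a l by (intro mult_pos_neg) auto
  then show "(7/8::real) powr (1/\<alpha>) < 1" unfolding c by simp
  show "((7/8::real) powr (1/\<alpha>)) powr \<alpha> = 7/8" using a by (simp add: powr_powr)
qed

lemma ev_ln: "filterlim (\<lambda>m::nat. ln (real m)) at_top sequentially"
  by (rule filterlim_compose[OF ln_at_top filterlim_real_sequentially])

lemma ev_E1:
  assumes a: "\<alpha> > 1"
  shows "eventually (\<lambda>m::nat. fa \<alpha> (real m) * lnp (real m) powr (\<alpha> - 1) / (real m)^2 * real m
            \<le> (2 / \<alpha>) * (fa \<alpha> (real m) - fa \<alpha> (real m - 1))) sequentially"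
proof -
  have e1: "eventually (\<lambda>m::nat. exp (ln (real m) powr \<alpha>) * ln (real m) powr (\<alpha> - 1) / real m
       \<le> (2 / \<alpha>) * (exp (ln (real m) powr \<alpha>) - exp (ln (real m - 1) powr \<alpha>))) sequentially"
    by (rule eventually_compose_filterlim[OF asy_i[OF a] filterlim_real_sequentially])
  have e2: "eventually (\<lambda>m::nat. m \<ge> 2) sequentially" by (rule eventually_ge_at_top)
  show ?thesis using e1 e2
  proof eventually_elim
    case (elim m)
    have m2: "real m \<ge> 2" using elim(2) by simp
    have "fa \<alpha> (real m) = exp (ln (real m) powr \<alpha>)" "lnp (real m) = ln (real m)"
      "fa \<alpha> (real m - 1) = exp (ln (real m - 1) powr \<alpha>)"
      using m2 by (auto simp: fa_def lnp_ge1)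
    moreover have "fa \<alpha> (real m) * ln (real m) powr (\<alpha> - 1) / (real m)^2 * real m
        = fa \<alpha> (real m) * ln (real m) powr (\<alpha> - 1) / real m" using m2 by (simp add: power2_eq_square)
    ultimately show ?case using elim(1) by simp
  qed
qed

lemma ev_E2:
  assumes a: "\<alpha> > 1" and c0: "c0 = (7/8::real) powr (1/\<alpha>)"
  shows "eventually (\<lambda>m::nat. real m \<ge> 1 \<and> real m powr c0 \<ge> 2 \<and>
      fa \<alpha> (real m) * lnp (real m) powr (\<alpha> - 1) * (real m)^2 \<le> (fa \<alpha> (real m powr c0 - 1))^2) sequentially"
proof -
  have cf: "7/8 \<le> c0" "c0 < 1" "c0 powr \<alpha> = 7/8" using c0_facts[OF a] c0 by auto
  have c00: "c0 > 0" using cf by simp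
  define d where "d = ln 2 / c0"
  have d0: "d > 0" unfolding d_def using c00 by simp
  have cd: "c0 * d = ln 2" unfolding d_def using c00 by simp
  have evL: "eventually (\<lambda>L::real. (L powr \<alpha> + (\<alpha> - 1) * ln L + 2 * L \<le> (7/4) * (L - d) powr \<alpha>) \<and> L \<ge> d + 1) at_top"
    using asy_ii[OF a d0] eventually_ge_at_top[of "d + 1"] by eventually_elim auto
  have evm: "eventually (\<lambda>m::nat. (ln (real m) powr \<alpha> + (\<alpha> - 1) * ln (ln (real m)) + 2 * ln (real m) \<le> (7/4) * (ln (real m) - d) powr \<alpha>) \<and> ln (real m) \<ge> d + 1) sequentially"
    by (rule eventually_compose_filterlim[OF evL ev_ln])
  show ?thesis using evm eventually_ge_at_top[of "1::nat"]
  proof eventually_elim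
    case (elim m)
    define x where "x = real m"
    define L where "L = ln x"
    have x1: "x \<ge> 1" using elim(2) unfolding x_def by simp
    have x0: "x > 0" using x1 by simp
    have LP: "L powr \<alpha> + (\<alpha> - 1) * ln L + 2 * L \<le> (7/4) * (L - d) powr \<alpha>" "L \<ge> d + 1"
      using elim(1) unfolding L_def x_def by auto
    have L0: "L > 0" using LP(2) d0 by simp
    have xe: "x = exp L" unfolding L_def using x0 by simp
    define b where "b = x powr c0"
    have be: "b = exp (c0 * L)" unfolding b_def L_def using x0 by (simp add: powr_def)
    have "c0 * L \<ge> c0 * (d + 1)" using LP(2) c00 by (intro mult_left_mono) auto
    then have cL: "c0 * L \<ge> ln 2 + c0" using cd by (simp add: algebra_simps)
    then have "ln 2 \<le> c0 * L" using c00 by simp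
    then have "exp (ln 2) \<le> exp (c0 * L)" by (simp only: exp_le_cancel_iff)
    then have b2: "b \<ge> 2" unfolding be by simp
    have lb: "ln (b - 1) \<ge> c0 * (L - d)"
    proof -
      have "b / 2 \<le> b - 1" using b2 by simp
      then have "ln (b / 2) \<le> ln (b - 1)" using b2 by (subst ln_le_cancel_iff) auto
      moreover have "ln (b / 2) = c0 * L - ln 2" using b2 unfolding be by (simp add: ln_div)
      ultimately show ?thesis using cd by (simp add: algebra_simps)
    qed
    have Ld: "L - d > 0" using LP(2) by simp
    have "(7/8) * (L - d) powr \<alpha> = (c0 * (L - d)) powr \<alpha>"
      using cf(3) c00 Ld by (simp add: powr_mult)
    also have "\<dots> \<le> ln (b - 1) powr \<alpha>" using lb c00 Ld a by (intro powr_mono2) auto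
    finally have p1: "(7/8) * (L - d) powr \<alpha> \<le> ln (b - 1) powr \<alpha>" .
    have "lnp (b - 1) = ln (b - 1)" using b2 by (intro lnp_ge1) simp
    then have fb: "(fa \<alpha> (b - 1))^2 = exp (2 * ln (b - 1) powr \<alpha>)" unfolding fa_def
      by (simp add: exp_double)
    have lhs: "fa \<alpha> x * lnp x powr (\<alpha> - 1) * x^2 = exp (L powr \<alpha> + (\<alpha> - 1) * ln L + 2 * L)"
    proof -
      have "fa \<alpha> x = exp (L powr \<alpha>)" unfolding fa_def L_def using x1 by (simp add: lnp_ge1)
      moreover have "lnp x powr (\<alpha> - 1) = exp ((\<alpha> - 1) * ln L)" unfolding L_def using x1 L0 L_def
        by (simp add: lnp_ge1 powr_def)
      moreover have "x^2 = exp (2 * L)" unfolding xe by (simp add: exp_double)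
      ultimately show ?thesis by (simp add: exp_add)
    qed
    have "exp (L powr \<alpha> + (\<alpha> - 1) * ln L + 2 * L) \<le> exp (2 * ln (b - 1) powr \<alpha>)"
      using LP(1) p1 by simp
    then have "fa \<alpha> x * lnp x powr (\<alpha> - 1) * x^2 \<le> (fa \<alpha> (b - 1))^2" using lhs fb by simp
    then show ?case using x1 b2 unfolding x_def b_def by simp
  qed
qed

lemma ev_E3:
  assumes a: "\<alpha> > 1" and c0: "c0 = (7/8::real) powr (1/\<alpha>)" and eta: "\<eta> > 0"
  shows "eventually (\<lambda>m::nat. fa \<alpha> (real m) * lnp (real m) powr (\<alpha> - 1) * 2 * exp (- (\<eta> * (real m / real m powr c0)) + C) \<le> 1) sequentially"
proof -
  have cf: "7/8 \<le> c0" "c0 < 1" using c0_facts[OF a] c0 by auto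
  have c1: "1 - c0 > 0" using cf by simp
  have evL: "eventually (\<lambda>L::real. (L powr \<alpha> + (\<alpha> - 1) * ln L + (ln 2 + C) \<le> \<eta> * exp ((1 - c0) * L)) \<and> L \<ge> 1) at_top"
    using asy_iii[OF a c1 eta, of "ln 2 + C"] eventually_ge_at_top[of 1] by eventually_elim auto
  have evm: "eventually (\<lambda>m::nat. (ln (real m) powr \<alpha> + (\<alpha> - 1) * ln (ln (real m)) + (ln 2 + C) \<le> \<eta> * exp ((1 - c0) * ln (real m))) \<and> ln (real m) \<ge> 1) sequentially"
    by (rule eventually_compose_filterlim[OF evL ev_ln])
  show ?thesis using evm eventually_ge_at_top[of "1::nat"]
  proof eventually_elim
    case (elim m)
    define x where "x = real m"
    define L where "L = ln x"
    have x1: "x \<ge> 1" using elim(2) unfolding x_def by simp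
    have x0: "x > 0" using x1 by simp
    have LP: "L powr \<alpha> + (\<alpha> - 1) * ln L + (ln 2 + C) \<le> \<eta> * exp ((1 - c0) * L)" "L \<ge> 1"
      using elim(1) unfolding L_def x_def by auto
    have L0: "L > 0" using LP(2) by simp
    have xe: "x = exp L" unfolding L_def using x0 by simp
    have xb: "x / x powr c0 = exp ((1 - c0) * L)"
    proof -
      have "x powr c0 = exp (c0 * L)" unfolding L_def using x0 by (simp add: powr_def)
      then have "x / x powr c0 = exp L / exp (c0 * L)" using xe by simp
      also have "\<dots> = exp (L - c0 * L)" by (simp add: exp_diff)
      finally show ?thesis by (simp add: algebra_simps)
    qed
    have "fa \<alpha> x * lnp x powr (\<alpha> - 1) * 2 * exp (- (\<eta> * (x / x powr c0)) + C)
        = exp (L powr \<alpha> + (\<alpha> - 1) * ln L + (ln 2 + C) - \<eta> * exp ((1 - c0) * L))"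
    proof -
      have "fa \<alpha> x = exp (L powr \<alpha>)" unfolding fa_def L_def using x1 by (simp add: lnp_ge1)
      moreover have "lnp x powr (\<alpha> - 1) = exp ((\<alpha> - 1) * ln L)" unfolding L_def using x1 L0 L_def
        by (simp add: lnp_ge1 powr_def)
      moreover have "exp (L powr \<alpha>) * exp ((\<alpha> - 1) * ln L) * exp (ln 2) * exp (- (\<eta> * exp ((1 - c0) * L)) + C)
          = exp (L powr \<alpha> + (\<alpha> - 1) * ln L + ln 2 + (- (\<eta> * exp ((1 - c0) * L)) + C))"
        by (simp only: exp_add)
      moreover have "L powr \<alpha> + (\<alpha> - 1) * ln L + ln 2 + (- (\<eta> * exp ((1 - c0) * L)) + C)
          = L powr \<alpha> + (\<alpha> - 1) * ln L + (ln 2 + C) - \<eta> * exp ((1 - c0) * L)" by simp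
      moreover have "exp (ln (2::real)) = 2" by simp
      ultimately show ?thesis unfolding xb by metis
    qed
    also have "\<dots> \<le> exp 0" using LP(1) by simp
    finally show ?case unfolding x_def by simp
  qed
qed

lemma Q_bound:
  fixes b x \<eta> D2 :: real and m :: nat
  assumes b: "b \<ge> 1" and bx: "real m \<le> b^2" and D2: "D2 \<ge> 0"
  shows "exp (- ((1 / b) * (real m * \<eta>))) * (1 + (1 / b / b + (1 / b)^2 * exp (1 / b * b)) * D2)^m
       \<le> exp (- (\<eta> * (real m / b)) + (1 + exp 1) * D2)"
proof -
  define y where "y = (1 / b / b + (1 / b)^2 * exp (1 / b * b)) * D2"
  have y: "y = (1 + exp 1) * D2 / b^2" unfolding y_def using b by (simp add: power2_eq_square field_simps)
  have y0: "y \<ge> 0" unfolding y using D2 by simp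
  have "(1 + y)^m \<le> exp y ^ m" using y0 by (intro power_mono) (auto simp: exp_ge_add_one_self add.commute)
  also have "\<dots> = exp (real m * y)" by (simp add: exp_of_nat_mult)
  also have "\<dots> \<le> exp ((1 + exp 1) * D2)"
  proof -
    have "real m * y = (1 + exp 1) * D2 * (real m / b^2)" unfolding y by simp
    also have "\<dots> \<le> (1 + exp 1) * D2 * 1"
      using bx b D2 by (intro mult_left_mono) (auto simp: divide_le_eq_1)
    finally show ?thesis by simp
  qed
  finally have "(1 + y)^m \<le> exp ((1 + exp 1) * D2)" .
  then have "exp (- ((1 / b) * (real m * \<eta>))) * (1 + y)^m \<le> exp (- ((1 / b) * (real m * \<eta>))) * exp ((1 + exp 1) * D2)"
    by (intro mult_left_mono) auto
  also have "\<dots> = exp (- (\<eta> * (real m / b)) + (1 + exp 1) * D2)" by (simp add: exp_add[symmetric] algebra_simps)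
  finally show ?thesis unfolding y_def .
qed

context sle_main begin

lemma e_bound:
  assumes b: "b \<ge> 2"
  shows "0 \<le> real_of_ereal (E (\<lambda>\<omega>. phr b (X \<omega>)))"
    "real_of_ereal (E (\<lambda>\<omega>. phr b (X \<omega>))) \<le> enn2real Iv / fa \<alpha> (b - 1)"
proof -
  have ZX: "(\<lambda>\<omega>. phr b (X \<omega>)) \<in> H" using H_lip1[OF XH phr_lip] .
  have bd: "ereal 0 \<le> E (\<lambda>\<omega>. phr b (X \<omega>))" "E (\<lambda>\<omega>. phr b (X \<omega>)) \<le> ereal 1"
    using E_bounds[OF ZX, of 0 1] phr_bounds by auto
  then obtain e where e: "E (\<lambda>\<omega>. phr b (X \<omega>)) = ereal e" "0 \<le> e"
    by (cases "E (\<lambda>\<omega>. phr b (X \<omega>))") auto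
  show "0 \<le> real_of_ereal (E (\<lambda>\<omega>. phr b (X \<omega>)))" using e by simp
  define s where "s = fa \<alpha> (b - 1)"
  have s0: "s > 0" unfolding s_def by (rule fa_pos)
  have "ereal e \<le> enn2ereal (capacity \<P> {\<omega>\<in>space M. \<bar>X \<omega>\<bar> > b - 1})"
    unfolding e(1)[symmetric] by (intro E_le_cap[OF ZX]) (auto simp: phr_bounds phr_pos)
  then have "ennreal e \<le> capacity \<P> {\<omega>\<in>space M. \<bar>X \<omega>\<bar> > b - 1}"
    using e2ennreal_mono by fastforce
  also have "\<dots> \<le> Vc s" unfolding Vc_def
  proof (intro cap_mono)
    show "{\<omega>\<in>space M. \<bar>X \<omega>\<bar> > b - 1} \<subseteq> {\<omega>\<in>space M. Y \<omega> > s}"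
      unfolding Y_def s_def using b alpha by (auto intro!: fa_strict)
  qed simp
  finally have "ennreal s * ennreal e \<le> ennreal s * Vc s" by (rule mult_left_mono) simp
  also have "\<dots> \<le> Iv" by (rule Vc_markov[OF s0])
  also have "\<dots> = ennreal (enn2real Iv)" by (rule Iv_real)
  finally have "ennreal (s * e) \<le> ennreal (enn2real Iv)" using s0 e by (simp add: ennreal_mult)
  then have "s * e \<le> enn2real Iv" by (simp add: ennreal_le_iff)
  then show "real_of_ereal (E (\<lambda>\<omega>. phr b (X \<omega>))) \<le> enn2real Iv / fa \<alpha> (b - 1)"
    using e s0 unfolding s_def by (simp add: field_simps)
qed

lemma main_sum:
  assumes eps: "\<epsilon> > 1"
  shows "(\<Sum>n. ennreal (exp ((lnp (real (Suc n))) powr \<alpha>) * (lnp (real (Suc n))) powr (\<alpha> - 1) / (real (Suc n))\<^sup>2)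
            * capacity \<P> {\<omega>\<in>space M. \<bar>\<Sum>k=1..Suc n. Xs k \<omega>\<bar> > real (Suc n) * \<epsilon>}) < \<infinity>"
proof -
  obtain D2 where D2: "D2 \<ge> 0" "E (\<lambda>\<omega>. (X \<omega>)^2) \<le> ereal D2" using EX2 by blast
  define \<eta> where "\<eta> = (\<epsilon> - 1) / 3"
  have eta: "\<eta> > 0" "\<epsilon> = 1 + 3 * \<eta>" using eps unfolding \<eta>_def by (auto simp: field_simps)
  define c0 where "c0 = (7/8::real) powr (1/\<alpha>)"
  have cf: "7/8 \<le> c0" "c0 < 1" using c0_facts[OF alpha] unfolding c0_def by auto
  define Ir where "Ir = enn2real Iv"
  have Ir0: "Ir \<ge> 0" unfolding Ir_def by simp
  define C where "C = (1 + exp 1) * D2"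
  define w where "w m = fa \<alpha> (real m) * lnp (real m) powr (\<alpha> - 1) / (real m)^2" for m :: nat
  have w0: "w m \<ge> 0" for m unfolding w_def by (simp add: fa_pos less_imp_le)
  define trm where "trm n = ennreal (exp ((lnp (real (Suc n))) powr \<alpha>) * (lnp (real (Suc n))) powr (\<alpha> - 1) / (real (Suc n))\<^sup>2)
            * capacity \<P> {\<omega>\<in>space M. \<bar>\<Sum>k=1..Suc n. Xs k \<omega>\<bar> > real (Suc n) * \<epsilon>}" for n
  have term_w: "trm n = ennreal (w (Suc n)) * capacity \<P> {\<omega>\<in>space M. \<bar>\<Sum>k=1..Suc n. Xs k \<omega>\<bar> > real (Suc n) * \<epsilon>}" for n
    by (simp add: trm_def w_def fa_def)
  have ev_meta: "eventually (\<lambda>m::nat. real m \<ge> 1 / \<eta>) sequentially"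
    by (rule eventually_compose_filterlim[OF eventually_ge_at_top filterlim_real_sequentially])
  have "eventually (\<lambda>m::nat. real m \<ge> 1 / \<eta> \<and>
      fa \<alpha> (real m) * lnp (real m) powr (\<alpha> - 1) / (real m)^2 * real m \<le> (2 / \<alpha>) * (fa \<alpha> (real m) - fa \<alpha> (real m - 1)) \<and>
      (real m \<ge> 1 \<and> real m powr c0 \<ge> 2 \<and> fa \<alpha> (real m) * lnp (real m) powr (\<alpha> - 1) * (real m)^2 \<le> (fa \<alpha> (real m powr c0 - 1))^2) \<and>
      fa \<alpha> (real m) * lnp (real m) powr (\<alpha> - 1) * 2 * exp (- (\<eta> * (real m / real m powr c0)) + C) \<le> 1) sequentially"
    using ev_meta ev_E1[OF alpha] ev_E2[OF alpha c0_def] ev_E3[OF alpha c0_def eta(1), of C]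
    by eventually_elim auto
  then obtain N where N: "\<And>m. m \<ge> N \<Longrightarrow> real m \<ge> 1 / \<eta> \<and>
      fa \<alpha> (real m) * lnp (real m) powr (\<alpha> - 1) / (real m)^2 * real m \<le> (2 / \<alpha>) * (fa \<alpha> (real m) - fa \<alpha> (real m - 1)) \<and>
      (real m \<ge> 1 \<and> real m powr c0 \<ge> 2 \<and> fa \<alpha> (real m) * lnp (real m) powr (\<alpha> - 1) * (real m)^2 \<le> (fa \<alpha> (real m powr c0 - 1))^2) \<and>
      fa \<alpha> (real m) * lnp (real m) powr (\<alpha> - 1) * 2 * exp (- (\<eta> * (real m / real m powr c0)) + C) \<le> 1"
    unfolding eventually_sequentially by blast
  define G where "G n = ennreal (2 / \<alpha>) * (ennreal (fa \<alpha> (real (Suc n)) - fa \<alpha> (real n)) * Vc (fa \<alpha> (real (Suc n))))" for n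
  define u where "u n = (if Suc n \<ge> N then (Ir^2 + 1) / (real (Suc n))^2 else w (Suc n))" for n
  have u0: "u n \<ge> 0" for n unfolding u_def using w0 by simp
  have bound: "trm n \<le> G n + ennreal (u n)" for n
  proof (cases "Suc n \<ge> N")
    case False
    have "trm n \<le> ennreal (w (Suc n)) * 1" unfolding term_w by (intro mult_left_mono cap_le_1) simp
    also have "\<dots> = ennreal (u n)" using False unfolding u_def by simp
    finally show ?thesis by (simp add: add_increasing)
  next
    case True
    define m where "m = Suc n"
    have Nm: "real m \<ge> 1 / \<eta>"
      "fa \<alpha> (real m) * lnp (real m) powr (\<alpha> - 1) / (real m)^2 * real m \<le> (2 / \<alpha>) * (fa \<alpha> (real m) - fa \<alpha> (real m - 1))"
      "real m \<ge> 1" "real m powr c0 \<ge> 2" "fa \<alpha> (real m) * lnp (real m) powr (\<alpha> - 1) * (real m)^2 \<le> (fa \<alpha> (real m powr c0 - 1))^2"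
      "fa \<alpha> (real m) * lnp (real m) powr (\<alpha> - 1) * 2 * exp (- (\<eta> * (real m / real m powr c0)) + C) \<le> 1"
      using N[of m] True unfolding m_def by auto
    define b where "b = real m powr c0"
    have b2: "b \<ge> 2" using Nm(4) unfolding b_def .
    have m0: "real m > 0" using Nm(3) by simp
    have meta: "real m * \<eta> \<ge> 1" using Nm(1) eta(1) by (simp add: field_simps)
    define e where "e = real_of_ereal (E (\<lambda>\<omega>. phr b (X \<omega>)))"
    have e0: "0 \<le> e" and e1: "e \<le> Ir / fa \<alpha> (b - 1)" using e_bound[OF b2] unfolding e_def Ir_def by auto
    define Q where "Q = exp (- ((1 / b) * (real m * \<eta>))) * (1 + (1 / b / b + (1 / b)^2 * exp (1 / b * b)) * D2)^m"
    have ev: "capacity \<P> {\<omega>\<in>space M. \<bar>\<Sum>k=1..m. Xs k \<omega>\<bar> > real m * \<epsilon>}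
        \<le> ennreal (real m) * Vc (fa \<alpha> (real m)) + ennreal (real m ^ 2 * e^2) + 2 * ennreal Q"
      unfolding e_def Q_def using main_event[OF eta(1) eta(2) _ meta b2 D2(2)] Nm(3) by simp
    have Q0: "Q \<ge> 0" unfolding Q_def using D2 b2 by simp
    have p1: "ennreal (w m) * (ennreal (real m) * Vc (fa \<alpha> (real m))) \<le> G n"
    proof -
      have "ennreal (w m) * (ennreal (real m) * Vc (fa \<alpha> (real m))) = ennreal (w m * real m) * Vc (fa \<alpha> (real m))"
        using w0 by (simp add: ennreal_mult mult.assoc)
      also have "\<dots> \<le> ennreal ((2 / \<alpha>) * (fa \<alpha> (real m) - fa \<alpha> (real m - 1))) * Vc (fa \<alpha> (real m))"
        using Nm(2) unfolding w_def by (intro mult_right_mono ennreal_leI) auto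
      also have "\<dots> = G n"
      proof -
        have d0: "0 \<le> fa \<alpha> (real (Suc n)) - fa \<alpha> (real n)" using alpha by (simp add: fa_mono)
        have r: "real m - 1 = real n" "real m = real (Suc n)" "real (Suc n) - 1 = real n" unfolding m_def by simp_all
        have "ennreal ((2 / \<alpha>) * (fa \<alpha> (real m) - fa \<alpha> (real m - 1)))
            = ennreal ((2 / \<alpha>) * (fa \<alpha> (real (Suc n)) - fa \<alpha> (real n)))" by (simp only: r)
        also have "\<dots> = ennreal (2 / \<alpha>) * ennreal (fa \<alpha> (real (Suc n)) - fa \<alpha> (real n))"
          by (rule ennreal_mult) (use alpha d0 in auto)
        finally show ?thesis unfolding G_def by (simp only: r mult.assoc)
      qed
      finally show ?thesis .
    qed
    have p2: "w m * (real m ^ 2 * e^2) \<le> Ir^2 / (real m)^2"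
    proof -
      have fb: "fa \<alpha> (b - 1) > 0" by (rule fa_pos)
      have "e^2 \<le> (Ir / fa \<alpha> (b - 1))^2" using e0 e1 by (intro power_mono) auto
      then have "w m * (real m ^ 2 * e^2) \<le> w m * (real m ^ 2 * (Ir / fa \<alpha> (b - 1))^2)"
        using w0 by (intro mult_left_mono) auto
      also have "\<dots> = (fa \<alpha> (real m) * lnp (real m) powr (\<alpha> - 1) * (real m)^2) * (Ir^2 / (fa \<alpha> (b - 1))^2) / (real m)^2"
        unfolding w_def using m0 by (simp add: field_simps power2_eq_square)
      also have "\<dots> \<le> (fa \<alpha> (b - 1))^2 * (Ir^2 / (fa \<alpha> (b - 1))^2) / (real m)^2"
        using Nm(5) unfolding b_def by (intro divide_right_mono mult_right_mono) auto
      also have "\<dots> = Ir^2 / (real m)^2" using fb by simp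
      finally show ?thesis .
    qed
    have p3: "2 * (w m * Q) \<le> 1 / (real m)^2"
    proof -
      have b1: "b \<ge> 1" using b2 by simp
      have bm: "real m \<le> b^2"
      proof -
        have "b^2 = real m powr (2 * c0)" unfolding b_def using m0
          by (simp add: power2_eq_square powr_add[symmetric])
        moreover have "real m powr 1 \<le> real m powr (2 * c0)" using cf Nm(3) by (intro powr_mono) auto
        ultimately show ?thesis using m0 by simp
      qed
      have "Q \<le> exp (- (\<eta> * (real m / b)) + C)" unfolding Q_def C_def by (rule Q_bound[OF b1 bm D2(1)])
      then have "2 * (w m * Q) \<le> 2 * (w m * exp (- (\<eta> * (real m / b)) + C))"
        using w0 by (intro mult_left_mono) auto
      also have "\<dots> = (fa \<alpha> (real m) * lnp (real m) powr (\<alpha> - 1) * 2 * exp (- (\<eta> * (real m / real m powr c0)) + C)) / (real m)^2"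
        unfolding w_def b_def by (simp add: field_simps)
      also have "\<dots> \<le> 1 / (real m)^2" using Nm(6) by (intro divide_right_mono) auto
      finally show ?thesis .
    qed
    have "trm n \<le> ennreal (w m) * (ennreal (real m) * Vc (fa \<alpha> (real m)) + ennreal (real m ^ 2 * e^2) + 2 * ennreal Q)"
      unfolding term_w m_def[symmetric] by (intro mult_left_mono ev) simp
    also have "\<dots> = ennreal (w m) * (ennreal (real m) * Vc (fa \<alpha> (real m))) + ennreal (w m * (real m ^ 2 * e^2)) + ennreal (2 * (w m * Q))"
      using w0 Q0 by (simp add: distrib_left ennreal_mult mult.assoc mult.left_commute)
    also have "\<dots> \<le> G n + ennreal (Ir^2 / (real m)^2) + ennreal (1 / (real m)^2)"
      using p1 p2 p3 by (intro add_mono ennreal_leI) auto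
    also have "\<dots> = G n + ennreal (u n)"
      using True Ir0 unfolding u_def m_def by (simp add: add.assoc ennreal_plus[symmetric] add_divide_distrib del: ennreal_plus)
    finally show ?thesis .
  qed
  have sumu: "summable u"
  proof -
    have "summable (\<lambda>n. inverse (real n ^ 2))" by (rule inverse_power_summable) simp
    then have "summable (\<lambda>n. inverse (real (Suc n) ^ 2))" by (subst summable_Suc_iff)
    then have s1: "summable (\<lambda>n. (Ir^2 + 1) * inverse (real (Suc n) ^ 2))" by (rule summable_mult)
    have "eventually (\<lambda>n. u n = (Ir^2 + 1) * inverse (real (Suc n) ^ 2)) sequentially"
      using eventually_ge_at_top[of N] by eventually_elim (auto simp: u_def field_simps)
    then show ?thesis using s1 by (subst summable_cong) auto
  qed
  have "(\<Sum>n. trm n) \<le> (\<Sum>n. G n + ennreal (u n))" by (intro suminf_le bound) auto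
  also have "\<dots> = (\<Sum>n. G n) + (\<Sum>n. ennreal (u n))" by (rule suminf_add[symmetric]) auto
  also have "(\<Sum>n. G n) = ennreal (2 / \<alpha>) * (\<Sum>n. ennreal (fa \<alpha> (real (Suc n)) - fa \<alpha> (real n)) * Vc (fa \<alpha> (real (Suc n))))"
    unfolding G_def by simp
  also have "\<dots> \<le> ennreal (2 / \<alpha>) * Iv"
  proof (rule mult_left_mono)
    have mo: "mono (\<lambda>n. fa \<alpha> (real n))" using alpha by (auto simp: mono_def intro!: fa_mono)
    have z: "0 \<le> fa \<alpha> (real 0)" by (simp add: fa_pos less_imp_le)
    show "(\<Sum>n. ennreal (fa \<alpha> (real (Suc n)) - fa \<alpha> (real n)) * Vc (fa \<alpha> (real (Suc n)))) \<le> Iv"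
      using interval_sum[OF mo z] by simp
  qed simp
  also have "(\<Sum>n. ennreal (u n)) = ennreal (\<Sum>n. u n)" by (rule suminf_ennreal2[OF u0 sumu])
  finally have "(\<Sum>n. trm n) \<le> ennreal (2 / \<alpha>) * Iv + ennreal (\<Sum>n. u n)" by (simp add: add_right_mono)
  moreover have "ennreal (2 / \<alpha>) * Iv + ennreal (\<Sum>n. u n) < \<infinity>"
    using Iv_fin by (simp add: ennreal_mult_less_top)
  ultimately show ?thesis unfolding trm_def by (rule le_less_trans)
qed

end

theorem theorem3p1:
  fixes M :: "'a measure" and H :: "('a \<Rightarrow> real) set" and E :: "('a \<Rightarrow> real) \<Rightarrow> ereal"
    and \<P> :: "'a measure set" and X :: "'a \<Rightarrow> real" and Xs :: "nat \<Rightarrow> 'a \<Rightarrow> real"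
    and \<alpha> :: real
  assumes sle: "sublinear_expectation_space M H E"
    and reg: "regular_sle M H E"
    and csub: "countably_subadditive M H E"
    and rep: "represents M H E \<P>"
    and alpha: "\<alpha> > 1"
    and XH: "X \<in> H" and XsH: "\<And>n. n \<ge> 1 \<Longrightarrow> Xs n \<in> H"
    and ident: "\<And>n. n \<ge> 1 \<Longrightarrow> ident_distr E (Xs n) X"
    and indep: "\<And>n. n \<ge> 1 \<Longrightarrow> indep_of E (map Xs [1..<Suc n]) (Xs (Suc n))"
    and mom: "ext_E E (\<lambda>\<omega>. exp ((lnp \<bar>X \<omega>\<bar>) powr \<alpha>))
                \<le> choquet M \<P> (\<lambda>\<omega>. exp ((lnp \<bar>X \<omega>\<bar>) powr \<alpha>))"
    and mom_fin: "choquet M \<P> (\<lambda>\<omega>. exp ((lnp \<bar>X \<omega>\<bar>) powr \<alpha>)) < \<infinity>"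
    and mean: "E X = 0" "E (\<lambda>\<omega>. - X \<omega>) = 0"
  shows "\<forall>\<epsilon>>1. (\<Sum>n. ennreal (exp ((lnp (real (Suc n))) powr \<alpha>)
                       * (lnp (real (Suc n))) powr (\<alpha> - 1) / (real (Suc n))\<^sup>2)
            * capacity \<P> {\<omega>\<in>space M. \<bar>\<Sum>k=1..Suc n. Xs k \<omega>\<bar> > real (Suc n) * \<epsilon>}) < \<infinity>"
proof -
  interpret sle_main M H E \<P> X Xs \<alpha>
  proof (unfold_locales)
    show "choquet M \<P> (\<lambda>\<omega>. fa \<alpha> \<bar>X \<omega>\<bar>) < \<infinity>" using mom_fin by (simp add: fa_def)
  qed (use sle rep XH XsH ident indep alpha mean in auto)
  show ?thesis using main_sum by blast
qed

end
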